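(* Let $L$ be a minimal aperiodic shift with zero topological entropy, and let $(n_s)_{s\in\mathbb N}$ be a sequence of integers $\ge 2$ with $\lim_s p_L(n_s)/p_L(n_s-1)=1$ (such a sequence exists). Then: (1) there is a subsequence $(m_i)$ of $(n_s)$ such that for every $u\in Fact_L$ the limit $M_u=\lim_{i\to\infty}p_L(u,m_i)/p_L(m_i)$ exists, and $\mu(Cyl_L(u))=M_u$ extends to a $\sigma$-invariant nonatomic Borel probability measure $\mu$ on $L$; (2) the maps $T_{m_i}$ converge pointwise on a subset of $I$ of full Lebesgue measure to a map $T$ which equals, Lebesgue-almost everywhere, the map $T_L$ constructed from $(L,\mu)$.
   Context: $A$ is a finite totally ordered alphabet. $A^{\mathbb N}$ has the lexicographic order and the Cantor topology, and $\sigma$ deletes the first letter. A shift is a closed $L\subseteq A^{\mathbb N}$ with $\sigma(L)\subseteq L$. It is minimal if it has no nonempty proper closed invariant subset, and aperiodic if it is not the orbit of one periodic word. Its topological entropy is $\lim\log p_L(n)/n$. $Fact_L(n)$ is the set of length-$n$ factors, $p_L(n)=|Fact_L(n)|$, $Fact_L(u,n)$ is the set of $v\in Fact_L(n)$ having $u$ as prefix, and $p_L(u,n)=|Fact_L(u,n)|$. We write $Cyl_L(u)=\{w\in L:u\text{ prefix of }w\}$ and $I=[0,1)$. The maps $T_n$ ($n>1$). Divide $I$ into $p_L(n)$ right-open intervals of equal length and label them, from left to right, by the elements of $Fact_L(n)$ in lexicographic order; call $J_v$ the interval labelled $v$. Similarly divide $I$ into $p_L(n-1)$ equal right-open intervals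 $J'_u$ labelled by $Fact_L(n-1)$. Then $T_n:I\to I$ is the map that, for each $v\in Fact_L(n)$, maps $J_v$ affinely and increasingly, with slope $p_L(n)/p_L(n-1)$, onto $J'_{\sigma(v)}$, where $\sigma(v)$ is $v$ with its first letter removed. Construction (for the measure $\mu$). For $w\le w'$ in $L$, $[w,w']=\{w''\in L:w\le w''\le w'\}$, and $w_{L,min}=\min L$. Put $\phi_\mu(w)=\mu([w_{L,min},w])$. Let $Z_0$ be the set of $x\in[0,1]$ with $|\phi_\mu^{-1}(x)|\ge 2$; each such preimage consists of exactly two consecutive words. Let $\hat I=[0,1]\sqcup Z_0^-$, where $Z_0^-=\{z^-:z\in Z_0\}$ is a disjoint copy of $Z_0$. Order $\hat I$ so that $z^-<z$ with nothing in between, extending the order of $[0,1]$, and give it the order topology. Let $\iota$ be the inclusion $[0,1]\to\hat I$, and let $\kappa:\hat I\to[0,1]$ be the identity on $[0,1]$ with $z^-\mapsto z$. Define $\phi(w)=(\phi_\mu(w))^-$ if $\phi_\mu^{-1}(\phi_\mu(w))=\{w,w'\}$ with $w<w'$, and $\phi(w)=\phi_\mu(w)$ otherwise. Set $\hat T=\phi\circ\sigma\circ\phi^{-1}$ and $T_L=\kappa\circ\hat T\circ\iota:[0,1]\to[0,1]$. *)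

theory Defs
  imports "HOL-Probability.Probability"
begin

(* Alphabet A = {0..<k} with the usual order on nat (any finite total order is
   order-isomorphic to such an initial segment). Infinite words are functions
   nat => nat; the type nat => nat carries the product topology (Function_Topology),
   and A^N = {w. \<forall>i. w i < k} with the subspace topology is the Cantor space. *)

type_synonym word = "nat \<Rightarrow> nat"

definition alph_words :: "nat \<Rightarrow> word set" where
  "alph_words k = {w. \<forall>i. w i < k}"

definition shift :: "word \<Rightarrow> word" where
  "shift w = (\<lambda>i. w (Suc i))"

definition word_less :: "word \<Rightarrow> word \<Rightarrow> bool" where
  "word_less w w' \<longleftrightarrow> (\<exists>i. (\<forall>j<i. w j = w' j) \<and> w i < w' i)"

definition word_le :: "word \<Rightarrow> word \<Rightarrow> bool" where
  "word_le w w' \<longleftrightarrow> w = w' \<or> word_less w w'"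

(* lexicographic order on finite words (used for words of equal length) *)
definition list_lex_less :: "nat list \<Rightarrow> nat list \<Rightarrow> bool" where
  "list_lex_less v v' \<longleftrightarrow>
     (\<exists>i. i < length v \<and> i < length v' \<and> take i v = take i v' \<and> v ! i < v' ! i)"

definition is_shift :: "nat \<Rightarrow> word set \<Rightarrow> bool" where
  "is_shift k L \<longleftrightarrow> L \<subseteq> alph_words k \<and> closed L \<and> shift ` L \<subseteq> L"

definition minimal_shift :: "nat \<Rightarrow> word set \<Rightarrow> bool" where
  "minimal_shift k L \<longleftrightarrow> is_shift k L \<and> L \<noteq> {} \<and>
     (\<forall>K. K \<subseteq> L \<and> K \<noteq> {} \<and> closed K \<and> shift ` K \<subseteq> K \<longrightarrow> K = L)"

definition aperiodic_shift :: "word set \<Rightarrow> bool" where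
  "aperiodic_shift L \<longleftrightarrow>
     \<not> (\<exists>w p. p > 0 \<and> (\<forall>i. w (i + p) = w i) \<and> L = {(shift ^^ j) w | j. True})"

definition Fact :: "word set \<Rightarrow> nat \<Rightarrow> nat list set" where
  "Fact L n = {map w [j..<j+n] | w j. w \<in> L}"

definition Facts :: "word set \<Rightarrow> nat list set" where
  "Facts L = (\<Union>n. Fact L n)"

definition pL :: "word set \<Rightarrow> nat \<Rightarrow> nat" where
  "pL L n = card (Fact L n)"

definition Fact_pref :: "word set \<Rightarrow> nat list \<Rightarrow> nat \<Rightarrow> nat list set" where
  "Fact_pref L u n = {v \<in> Fact L n. take (length u) v = u}"

definition pL_pref :: "word set \<Rightarrow> nat list \<Rightarrow> nat \<Rightarrow> nat" where
  "pL_pref L u n = card (Fact_pref L u n)"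

definition Cyl :: "word set \<Rightarrow> nat list \<Rightarrow> word set" where
  "Cyl L u = {w \<in> L. \<forall>i<length u. w i = u ! i}"

definition zero_entropy :: "word set \<Rightarrow> bool" where
  "zero_entropy L \<longleftrightarrow> ((\<lambda>n. ln (real (pL L n)) / real n) \<longlonglongrightarrow> 0)"

definition fact_rank :: "word set \<Rightarrow> nat \<Rightarrow> nat list \<Rightarrow> nat" where
  "fact_rank L n v = card {v' \<in> Fact L n. list_lex_less v' v}"

definition fact_of_rank :: "word set \<Rightarrow> nat \<Rightarrow> nat \<Rightarrow> nat list" where
  "fact_of_rank L n r = (THE v. v \<in> Fact L n \<and> fact_rank L n v = r)"

(* T_n: J_v = [r/p(n), (r+1)/p(n)) with r the rank of v, mapped affinely and
   increasingly with slope p(n)/p(n-1) onto J'_{sigma v}. *)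
definition T_map :: "word set \<Rightarrow> nat \<Rightarrow> real \<Rightarrow> real" where
  "T_map L n x =
     (let r = nat \<lfloor>x * real (pL L n)\<rfloor>;
          v = fact_of_rank L n r
      in (real (fact_rank L (n - 1) (tl v)) + (x * real (pL L n) - real r))
           / real (pL L (n - 1)))"

definition borel_prob_on :: "word set \<Rightarrow> word measure \<Rightarrow> bool" where
  "borel_prob_on L M \<longleftrightarrow> prob_space M \<and> sets M = sets (restrict_space borel L)"

definition shift_invariant :: "word set \<Rightarrow> word measure \<Rightarrow> bool" where
  "shift_invariant L M \<longleftrightarrow>
     (\<forall>B \<in> sets M. measure M (shift -` B \<inter> L) = measure M B)"

definition nonatomic :: "word set \<Rightarrow> word measure \<Rightarrow> bool" where
  "nonatomic L M \<longleftrightarrow> (\<forall>w \<in> L. measure M {w} = 0)"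

definition word_interval :: "word set \<Rightarrow> word \<Rightarrow> word \<Rightarrow> word set" where
  "word_interval L w w' = {w'' \<in> L. word_le w w'' \<and> word_le w'' w'}"

definition word_min :: "word set \<Rightarrow> word" where
  "word_min L = (THE w. w \<in> L \<and> (\<forall>w' \<in> L. word_le w w'))"

definition phi_mu :: "word set \<Rightarrow> word measure \<Rightarrow> word \<Rightarrow> real" where
  "phi_mu L M w = measure M (word_interval L (word_min L) w)"

definition Z0 :: "word set \<Rightarrow> word measure \<Rightarrow> real set" where
  "Z0 L M = {x \<in> {0..1}. \<exists>w \<in> L. \<exists>w' \<in> L. w \<noteq> w' \<and> phi_mu L M w = x \<and> phi_mu L M w' = x}"

(* The space \<hat>I = [0,1] \<squnion> Z0^- is represented inside real \<times> bool:
   (x, True) is the point x of [0,1], (z, False) is z^- for z \<in> Z0. *)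
definition Ihat :: "word set \<Rightarrow> word measure \<Rightarrow> (real \<times> bool) set" where
  "Ihat L M = ({0..1} \<times> {True}) \<union> (Z0 L M \<times> {False})"

definition iota :: "real \<Rightarrow> real \<times> bool" where
  "iota x = (x, True)"

definition kappa :: "real \<times> bool \<Rightarrow> real" where
  "kappa z = fst z"

definition phi_hat :: "word set \<Rightarrow> word measure \<Rightarrow> word \<Rightarrow> real \<times> bool" where
  "phi_hat L M w =
     (if \<exists>w'. word_less w w' \<and> {v \<in> L. phi_mu L M v = phi_mu L M w} = {w, w'}
      then (phi_mu L M w, False) else (phi_mu L M w, True))"

definition T_hat :: "word set \<Rightarrow> word measure \<Rightarrow> real \<times> bool \<Rightarrow> real \<times> bool" where
  "T_hat L M z = phi_hat L M (shift (inv_into L (phi_hat L M) z))"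

definition T_L :: "word set \<Rightarrow> word measure \<Rightarrow> real \<Rightarrow> real" where
  "T_L L M x = kappa (T_hat L M (iota x))"

end

theory Submission
  imports Defs
begin


section \<open>Lexicographic order on lists\<close>

lemma lex_irrefl: "\<not> list_lex_less v v"
  unfolding list_lex_less_def by auto

lemma take_eq_nth: "take i v = take i v' \<Longrightarrow> j < i \<Longrightarrow> j < length v \<Longrightarrow> j < length v' \<Longrightarrow> v ! j = v' ! j"
  by (metis nth_take)

lemma lex_asym: "list_lex_less v v' \<Longrightarrow> \<not> list_lex_less v' v"
proof
  assume "list_lex_less v v'" "list_lex_less v' v"
  then obtain i j where i: "i < length v" "i < length v'" "take i v = take i v'" "v ! i < v' ! i"
    and j: "j < length v'" "j < length v" "take j v' = take j v" "v' ! j < v ! j"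
    unfolding list_lex_less_def by blast
  show False
  proof (cases i j rule: linorder_cases)
    case less then show ?thesis using i j take_eq_nth[of j v' v i] by auto
  next
    case equal then show ?thesis using i j by auto
  next
    case greater then show ?thesis using i j take_eq_nth[of i v v' j] by auto
  qed
qed

lemma lex_trans: "list_lex_less u v \<Longrightarrow> list_lex_less v w \<Longrightarrow> length u = length v \<Longrightarrow> length v = length w \<Longrightarrow> list_lex_less u w"
proof -
  assume a: "list_lex_less u v" "list_lex_less v w" "length u = length v" "length v = length w"
  then obtain i j where i: "i < length u" "take i u = take i v" "u ! i < v ! i"
    and j: "j < length v" "take j v = take j w" "v ! j < w ! j"
    unfolding list_lex_less_def by blast
  show ?thesis
  proof (cases i j rule: linorder_cases)
    case less
    have "take i v = take i w" using j(2) less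
      by (metis min.strict_order_iff take_take)
    moreover have "v ! i = w ! i" using j(2) less i(1) a(3,4)
      by (metis nth_take)
    ultimately show ?thesis using i a(3,4) unfolding list_lex_less_def by (intro exI[of _ i]) auto
  next
    case equal then show ?thesis using i j a(3,4) unfolding list_lex_less_def by (intro exI[of _ i]) auto
  next
    case greater
    have "take j u = take j v" using i(2) greater
      by (metis min.strict_order_iff take_take)
    moreover have "u ! j = v ! j" using i(2) greater j(1) a(3,4)
      by (metis nth_take)
    ultimately show ?thesis using j a(3,4) unfolding list_lex_less_def by (intro exI[of _ j]) auto
  qed
qed

lemma lex_total: "length v = length v' \<Longrightarrow> v \<noteq> v' \<Longrightarrow> list_lex_less v v' \<or> list_lex_less v' v"
proof -
  assume a: "length v = length v'" "v \<noteq> v'"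
  then have "\<exists>i. i < length v \<and> v ! i \<noteq> v' ! i" using nth_equalityI by blast
  define i where "i = (LEAST i. i < length v \<and> v ! i \<noteq> v' ! i)"
  have i: "i < length v" "v ! i \<noteq> v' ! i"
    using LeastI_ex[OF \<open>\<exists>i. _\<close>] unfolding i_def by auto
  have "\<forall>j<i. v ! j = v' ! j" using not_less_Least[of _ "\<lambda>i. i < length v \<and> v ! i \<noteq> v' ! i"] i
    unfolding i_def by (meson order.strict_trans)
  then have "take i v = take i v'" using i a by (intro nth_equalityI) auto
  then show ?thesis using i a unfolding list_lex_less_def
    by (cases "v ! i < v' ! i") (auto intro!: exI[of _ i])
qed

lemma lex_take_imp: "length v = length v' \<Longrightarrow> list_lex_less (take l v) (take l v') \<Longrightarrow> list_lex_less v v'"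
proof -
  assume a: "length v = length v'" "list_lex_less (take l v) (take l v')"
  then obtain i where i: "i < length (take l v)" "take i (take l v) = take i (take l v')" "take l v ! i < take l v' ! i"
    unfolding list_lex_less_def by auto
  have il: "i < l" "i < length v" using i(1) by auto
  have "take i v = take i v'" using i(2) il by (simp add: min_def)
  moreover have "v ! i < v' ! i" using i(3) il by simp
  ultimately show ?thesis using il a(1) unfolding list_lex_less_def by (intro exI[of _ i]) auto
qed

lemma lex_imp_take: "length v = length v' \<Longrightarrow> list_lex_less v v' \<Longrightarrow> \<not> list_lex_less (take l v') (take l v)"
  using lex_take_imp lex_asym by metis

lemma lex_Cons_iff: "list_lex_less (a # v) (b # v') \<longleftrightarrow> a < b \<or> (a = b \<and> list_lex_less v v')"
proof
  assume "list_lex_less (a # v) (b # v')"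
  then obtain i where i: "i < Suc (length v)" "i < Suc (length v')" "take i (a#v) = take i (b#v')" "(a#v) ! i < (b#v') ! i"
    unfolding list_lex_less_def by auto
  show "a < b \<or> (a = b \<and> list_lex_less v v')"
  proof (cases i)
    case 0 then show ?thesis using i by auto
  next
    case (Suc j) then show ?thesis using i unfolding list_lex_less_def by (intro disjI2) auto
  qed
next
  assume "a < b \<or> (a = b \<and> list_lex_less v v')"
  then show "list_lex_less (a # v) (b # v')"
  proof
    assume "a < b" then show ?thesis unfolding list_lex_less_def by (intro exI[of _ 0]) auto
  next
    assume "a = b \<and> list_lex_less v v'"
    then obtain i where "i < length v" "i < length v'" "take i v = take i v'" "v ! i < v' ! i"
      unfolding list_lex_less_def by auto
    then show ?thesis using \<open>a = b \<and> _\<close> unfolding list_lex_less_def by (intro exI[of _ "Suc i"]) auto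
  qed
qed

lemma lex_tl: "length v = length v' \<Longrightarrow> v \<noteq> [] \<Longrightarrow> hd v = hd v' \<Longrightarrow> list_lex_less v v' \<longleftrightarrow> list_lex_less (tl v) (tl v')"
  by (cases v; cases v') (auto simp: lex_Cons_iff)



lemma rank_less:
  fixes R :: "'a \<Rightarrow> 'a \<Rightarrow> bool"
  assumes "finite F" "x \<in> F" "y \<in> F" "R x y"
    and tr: "\<forall>p\<in>F. \<forall>q\<in>F. \<forall>t\<in>F. R p q \<longrightarrow> R q t \<longrightarrow> R p t"
    and irr: "\<forall>p. \<not> R p p"
  shows "card {z \<in> F. R z x} < card {z \<in> F. R z y}"
proof (rule psubset_card_mono)
  show "finite {z \<in> F. R z y}" using assms(1) by simp
  have "{z \<in> F. R z x} \<subseteq> {z \<in> F. R z y}" using tr assms(2,3,4) by blast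
  moreover have "x \<in> {z \<in> F. R z y}" "x \<notin> {z \<in> F. R z x}" using assms(2,4) irr by auto
  ultimately show "{z \<in> F. R z x} \<subset> {z \<in> F. R z y}" by blast
qed

lemma rank_bij:
  fixes R :: "'a \<Rightarrow> 'a \<Rightarrow> bool"
  assumes "finite F"
    and tr: "\<forall>p\<in>F. \<forall>q\<in>F. \<forall>t\<in>F. R p q \<longrightarrow> R q t \<longrightarrow> R p t"
    and irr: "\<forall>p. \<not> R p p"
    and tot: "\<forall>p\<in>F. \<forall>q\<in>F. p \<noteq> q \<longrightarrow> R p q \<or> R q p"
  shows "bij_betw (\<lambda>x. card {z \<in> F. R z x}) F {0..<card F}"
proof -
  let ?r = "\<lambda>x. card {z \<in> F. R z x}"
  have inj: "inj_on ?r F"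
  proof (rule inj_onI)
    fix x y assume xy: "x \<in> F" "y \<in> F" "?r x = ?r y"
    show "x = y"
    proof (rule ccontr)
      assume "x \<noteq> y"
      then have "R x y \<or> R y x" using tot xy by blast
      then show False
      proof
        assume "R x y" then have "?r x < ?r y" using rank_less[OF assms(1) xy(1,2) _ tr irr] by blast
        then show False using xy by simp
      next
        assume "R y x" then have "?r y < ?r x" using rank_less[OF assms(1) xy(2,1) _ tr irr] by blast
        then show False using xy by simp
      qed
    qed
  qed
  have sub: "?r ` F \<subseteq> {0..<card F}"
  proof
    fix y assume "y \<in> ?r ` F"
    then obtain x where x: "x \<in> F" "y = ?r x" by auto
    have "{z \<in> F. R z x} \<subset> F" using x irr by auto
    then have "?r x < card F" using assms(1) psubset_card_mono by blast
    then show "y \<in> {0..<card F}" using x by simp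
  qed
  have "card (?r ` F) = card {0..<card F}" using card_image[OF inj] by simp
  then have "?r ` F = {0..<card F}" using sub by (simp add: card_subset_eq)
  then show ?thesis using inj by (simp add: bij_betw_def)
qed

lemma surj_count:
  assumes "finite A" "f ` A = B" "C \<subseteq> B"
  shows "card C \<le> card {x \<in> A. f x \<in> C}"
    and "card {x \<in> A. f x \<in> C} + card B \<le> card A + card C"
proof -
  have fB: "finite B" using assms by auto
  have sC: "f ` {x \<in> A. f x \<in> C} = C" using assms by auto
  show c1: "card C \<le> card {x \<in> A. f x \<in> C}"
    using card_image_le[of "{x \<in> A. f x \<in> C}" f] sC assms by auto
  have sD: "f ` {x \<in> A. f x \<in> B - C} = B - C" using assms by auto
  have c2: "card (B - C) \<le> card {x \<in> A. f x \<in> B - C}"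
    using card_image_le[of "{x \<in> A. f x \<in> B - C}" f] sD assms by auto
  have "card {x \<in> A. f x \<in> C} + card {x \<in> A. f x \<in> B - C} = card A"
  proof -
    have "{x \<in> A. f x \<in> C} \<union> {x \<in> A. f x \<in> B - C} = A" using assms by auto
    moreover have "{x \<in> A. f x \<in> C} \<inter> {x \<in> A. f x \<in> B - C} = {}" by auto
    ultimately show ?thesis using assms(1) card_Un_disjoint
      by (metis (no_types, lifting) finite_Un)
  qed
  moreover have "card (B - C) + card C = card B"
    using card_Diff_subset[OF finite_subset[OF assms(3) fB] assms(3)] card_mono[OF fB assms(3)] by simp
  ultimately show "card {x \<in> A. f x \<in> C} + card B \<le> card A + card C" using c2 by linarith
qed






lemma shift_pow: "(shift ^^ j) w = (\<lambda>i. w (i + j))"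
  by (induction j arbitrary: w) (auto simp: shift_def funpow_Suc_right)

lemma map_upt_shift: "map w [j..<j+n] = map ((shift ^^ j) w) [0..<n]"
  by (induction n) (auto simp: shift_pow add.commute)

locale shiftL =
  fixes k :: nat and L :: "word set"
  assumes sub: "L \<subseteq> alph_words k" and inv: "shift ` L \<subseteq> L" and ne: "L \<noteq> {}"
begin

lemma shift_in: "w \<in> L \<Longrightarrow> shift w \<in> L" using inv by auto

lemma shift_pow_in: "w \<in> L \<Longrightarrow> (shift ^^ j) w \<in> L"
  by (induction j) (auto intro: shift_in)

lemma letter: "w \<in> L \<Longrightarrow> w i < k" using sub unfolding alph_words_def by auto

lemma k_pos: "k > 0" using ne letter by fastforce

lemma Fact_eq: "Fact L n = (\<lambda>w. map w [0..<n]) ` L"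
proof
  show "Fact L n \<subseteq> (\<lambda>w. map w [0..<n]) ` L"
    unfolding Fact_def using map_upt_shift shift_pow_in by fastforce
  show "(\<lambda>w. map w [0..<n]) ` L \<subseteq> Fact L n"
    unfolding Fact_def by (force intro: exI[of _ 0])
qed

lemma Fact_mem: "w \<in> L \<Longrightarrow> map w [0..<n] \<in> Fact L n" using Fact_eq by auto

lemma Fact_memE: "v \<in> Fact L n \<Longrightarrow> (\<And>w. w \<in> L \<Longrightarrow> v = map w [0..<n] \<Longrightarrow> P) \<Longrightarrow> P"
  using Fact_eq by auto

lemma len_Fact: "v \<in> Fact L n \<Longrightarrow> length v = n"
  by (erule Fact_memE) auto

lemma letters_Fact: "v \<in> Fact L n \<Longrightarrow> set v \<subseteq> {..<k}"
  by (erule Fact_memE) (auto intro: letter)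

lemma fin_Fact: "finite (Fact L n)"
proof -
  have "Fact L n \<subseteq> {xs. set xs \<subseteq> {..<k} \<and> length xs = n}" using len_Fact letters_Fact by blast
  then show ?thesis using finite_lists_length_eq[of "{..<k}" n] finite_subset by auto
qed

lemma Fact_ne: "Fact L n \<noteq> {}" using Fact_eq ne by auto

lemma pL_pos: "pL L n > 0" unfolding pL_def using fin_Fact Fact_ne by (simp add: card_gt_0_iff)

lemma take_Fact: "v \<in> Fact L n \<Longrightarrow> m \<le> n \<Longrightarrow> take m v \<in> Fact L m"
  by (erule Fact_memE) (auto simp: take_map Fact_mem min_def)

lemma take_Fact_img: "m \<le> n \<Longrightarrow> take m ` Fact L n = Fact L m"
proof
  assume "m \<le> n"
  then show "take m ` Fact L n \<subseteq> Fact L m" using take_Fact by auto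
  show "Fact L m \<subseteq> take m ` Fact L n"
  proof
    fix v assume "v \<in> Fact L m"
    then obtain w where "w \<in> L" "v = map w [0..<m]" by (rule Fact_memE)
    then have "v = take m (map w [0..<n])" using \<open>m \<le> n\<close> by (simp add: take_map min_def)
    then show "v \<in> take m ` Fact L n" using Fact_mem \<open>w \<in> L\<close> by auto
  qed
qed

lemma tl_Fact: "v \<in> Fact L n \<Longrightarrow> tl v \<in> Fact L (n - 1)"
proof (erule Fact_memE)
  fix w assume "w \<in> L" "v = map w [0..<n]"
  then have "tl v = map (shift w) [0..<n-1]"
    by (cases n) (simp_all add: shift_def upt_conv_Cons map_Suc_upt[symmetric] comp_def del: upt_Suc)
  then show ?thesis using Fact_mem shift_in \<open>w \<in> L\<close> by auto
qed

lemma pL_mono: "m \<le> n \<Longrightarrow> pL L m \<le> pL L n"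
  unfolding pL_def using take_Fact_img card_image_le fin_Fact by metis

lemma Fact_pref_sub: "Fact_pref L u n \<subseteq> Fact L n" unfolding Fact_pref_def by auto

lemma pL_pref_le: "pL_pref L u n \<le> pL L n"
  unfolding pL_pref_def pL_def using Fact_pref_sub fin_Fact card_mono by metis

lemma pL_pref_Nil: "pL_pref L [] n = pL L n"
  unfolding pL_pref_def pL_def Fact_pref_def by simp

lemma fin_Fact_pref: "finite (Fact_pref L u n)" using Fact_pref_sub fin_Fact finite_subset by metis

lemma pref_split:
  assumes "length u < n"
  shows "pL_pref L u n = (\<Sum>a<k. pL_pref L (u @ [a]) n)"
proof -
  have eq: "Fact_pref L u n = (\<Union>a<k. Fact_pref L (u @ [a]) n)"
  proof
    show "Fact_pref L u n \<subseteq> (\<Union>a<k. Fact_pref L (u @ [a]) n)"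
    proof
      fix v assume v: "v \<in> Fact_pref L u n"
      then have len: "length v = n" and vF: "v \<in> Fact L n" and tu: "take (length u) v = u"
        unfolding Fact_pref_def using len_Fact by auto
      have "v ! length u \<in> set v" using len assms by simp
      then have "v ! length u < k" using letters_Fact vF by auto
      moreover have "take (length (u @ [v ! length u])) v = u @ [v ! length u]"
        using tu len assms by (simp add: take_Suc_conv_app_nth)
      ultimately show "v \<in> (\<Union>a<k. Fact_pref L (u @ [a]) n)" using vF unfolding Fact_pref_def by auto
    qed
    show "(\<Union>a<k. Fact_pref L (u @ [a]) n) \<subseteq> Fact_pref L u n"
    proof
      fix v assume "v \<in> (\<Union>a<k. Fact_pref L (u @ [a]) n)"
      then obtain a where v: "v \<in> Fact L n" "take (Suc (length u)) v = u @ [a]" unfolding Fact_pref_def by auto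
      have "take (length u) v = take (length u) (take (Suc (length u)) v)" by simp
      also have "\<dots> = u" using v(2) by simp
      finally show "v \<in> Fact_pref L u n" using v(1) unfolding Fact_pref_def by simp
    qed
  qed
  have disj: "disjoint_family_on (\<lambda>a. Fact_pref L (u @ [a]) n) {..<k}"
    unfolding disjoint_family_on_def Fact_pref_def
    by auto
  show ?thesis unfolding pL_pref_def eq
    by (rule card_UN_disjoint') (use disj fin_Fact_pref in auto)
qed

lemma pref_right:
  assumes "length u \<le> m"
  shows "pL_pref L u m \<le> pL_pref L u (Suc m)"
    and "pL_pref L u (Suc m) + pL L m \<le> pL L (Suc m) + pL_pref L u m"
proof -
  have A: "{x \<in> Fact L (Suc m). take m x \<in> Fact_pref L u m} = Fact_pref L u (Suc m)"
    unfolding Fact_pref_def using take_Fact[of _ "Suc m" m] assms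
    by (auto simp: min_absorb1)
  have C: "Fact_pref L u m \<subseteq> Fact L m" by (rule Fact_pref_sub)
  note sc = surj_count[OF fin_Fact take_Fact_img[of m "Suc m", simplified] C]
  show "pL_pref L u m \<le> pL_pref L u (Suc m)" using sc(1) A unfolding pL_pref_def by simp
  show "pL_pref L u (Suc m) + pL L m \<le> pL L (Suc m) + pL_pref L u m"
    using sc(2) A unfolding pL_pref_def pL_def by simp
qed

end

locale shiftL_surj = shiftL +
  assumes surj: "shift ` L = L"
begin

lemma tl_Fact_img: "tl ` Fact L (Suc m) = Fact L m"
proof
  show "tl ` Fact L (Suc m) \<subseteq> Fact L m" using tl_Fact by fastforce
  show "Fact L m \<subseteq> tl ` Fact L (Suc m)"
  proof
    fix v assume "v \<in> Fact L m"
    then obtain w where w: "w \<in> L" "v = map w [0..<m]" by (rule Fact_memE)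
    then obtain w' where w': "w' \<in> L" "w = shift w'" using surj by auto
    have "tl (map w' [0..<Suc m]) = v" using w w'
      by (simp add: shift_def upt_conv_Cons map_Suc_upt[symmetric] del: upt_Suc)
    moreover have "map w' [0..<Suc m] \<in> Fact L (Suc m)" by (rule Fact_mem[OF w'(1)])
    ultimately show "v \<in> tl ` Fact L (Suc m)" by (metis image_eqI)
  qed
qed

lemma pref_left:
  assumes "length u \<le> m"
  shows "pL_pref L u m \<le> (\<Sum>a<k. pL_pref L (a # u) (Suc m))"
    and "(\<Sum>a<k. pL_pref L (a # u) (Suc m)) + pL L m \<le> pL L (Suc m) + pL_pref L u m"
proof -
  have A: "{x \<in> Fact L (Suc m). tl x \<in> Fact_pref L u m} = (\<Union>a<k. Fact_pref L (a # u) (Suc m))"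
  proof
    show "{x \<in> Fact L (Suc m). tl x \<in> Fact_pref L u m} \<subseteq> (\<Union>a<k. Fact_pref L (a # u) (Suc m))"
    proof
      fix x assume x: "x \<in> {x \<in> Fact L (Suc m). tl x \<in> Fact_pref L u m}"
      then have xF: "x \<in> Fact L (Suc m)" and tu: "take (length u) (tl x) = u" unfolding Fact_pref_def by auto
      then obtain a x' where ax: "x = a # x'" using len_Fact[OF xF] by (cases x) auto
      then have "a < k" using letters_Fact[OF xF] by auto
      moreover have "take (length (a # u)) x = a # u" using ax tu by simp
      ultimately show "x \<in> (\<Union>a<k. Fact_pref L (a # u) (Suc m))" using xF unfolding Fact_pref_def by auto
    qed
    show "(\<Union>a<k. Fact_pref L (a # u) (Suc m)) \<subseteq> {x \<in> Fact L (Suc m). tl x \<in> Fact_pref L u m}"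
    proof
      fix x assume "x \<in> (\<Union>a<k. Fact_pref L (a # u) (Suc m))"
      then obtain a where xF: "x \<in> Fact L (Suc m)" and t: "take (Suc (length u)) x = a # u"
        unfolding Fact_pref_def by auto
      then obtain x' where ax: "x = a # x'" by (cases x) auto
      then show "x \<in> {x \<in> Fact L (Suc m). tl x \<in> Fact_pref L u m}"
        using xF t tl_Fact[OF xF] unfolding Fact_pref_def by auto
    qed
  qed
  have disj: "disjoint_family_on (\<lambda>a. Fact_pref L (a # u) (Suc m)) {..<k}"
    unfolding disjoint_family_on_def Fact_pref_def by auto
  have cs: "card (\<Union>a<k. Fact_pref L (a # u) (Suc m)) = (\<Sum>a<k. pL_pref L (a # u) (Suc m))"
    unfolding pL_pref_def by (rule card_UN_disjoint') (use disj fin_Fact_pref in auto)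
  have C: "Fact_pref L u m \<subseteq> Fact L m" by (rule Fact_pref_sub)
  note sc = surj_count[OF fin_Fact tl_Fact_img C]
  show "pL_pref L u m \<le> (\<Sum>a<k. pL_pref L (a # u) (Suc m))" using sc(1) A cs unfolding pL_pref_def by simp
  show "(\<Sum>a<k. pL_pref L (a # u) (Suc m)) + pL L m \<le> pL L (Suc m) + pL_pref L u m"
    using sc(2) A cs unfolding pL_pref_def pL_def by simp
qed

end



lemma hausdorff_nat: "Hausdorff_space (euclidean :: nat topology)"
  unfolding Hausdorff_space_def disjnt_def
  by (metis hausdorff open_openin)
lemma hausdorff_word: "Hausdorff_space (euclidean :: word topology)"
  by (metis euclidean_product_topology Hausdorff_space_product_topology hausdorff_nat)
lemma compact_closed_word: "compact (S :: word set) \<Longrightarrow> closed S"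
proof -
  assume "compact S"
  then have "compactin euclidean S" by (simp only: compactin_euclidean_iff)
  then have "closedin euclidean S" by (rule compactin_imp_closedin[OF hausdorff_word])
  then show "closed S" unfolding closed_closedin .
qed
lemma finite_closed_word: "finite (S :: word set) \<Longrightarrow> closed S"
  by (intro compact_closed_word finite_imp_compact)

lemma diag_subseq:
  fixes X :: "nat \<Rightarrow> nat list \<Rightarrow> real"
  assumes "\<And>i u. X i u \<in> {0..1}"
  shows "\<exists>r l. strict_mono r \<and> (\<forall>u. (\<lambda>i. X (r i) u) \<longlonglongrightarrow> l u)"
proof -
  let ?S = "PiE (UNIV :: nat list set) (\<lambda>_. {0..1::real})"
  have "compactin (product_topology (\<lambda>_. euclidean) UNIV) ?S"
    by (subst compactin_PiE) auto
  then have "compact ?S" by (simp add: euclidean_product_topology)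
  then have "seq_compact ?S" by (rule compact_imp_seq_compact)
  moreover have "\<forall>i. X i \<in> ?S" using assms by auto
  ultimately obtain l r where "strict_mono r" "(X \<circ> r) \<longlonglongrightarrow> l"
    unfolding seq_compact_def by blast
  moreover have "(\<lambda>i. X (r i) u) \<longlonglongrightarrow> l u" for u
  proof -
    have "continuous_on UNIV (\<lambda>x::nat list \<Rightarrow> real. x u)" by simp
    from continuous_on_tendsto_compose[OF this \<open>(X \<circ> r) \<longlonglongrightarrow> l\<close>]
    show ?thesis by (simp add: comp_def)
  qed
  ultimately show ?thesis by blast
qed

lemma ratio_bound:
  fixes a b P Q :: real
  assumes "0 \<le> b" "b \<le> a" "a - b \<le> P - Q" "b \<le> Q" "0 < Q" "Q \<le> P"
  shows "\<bar>a / P - b / Q\<bar> \<le> 1 - Q / P"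
proof -
  have P: "P > 0" using assms by linarith
  have e: "a / P - b / Q = (a - b) / P - b * (P - Q) / (P * Q)"
    using P assms(5) by (simp add: field_simps)
  have t1: "0 \<le> (a - b) / P" using assms P by (intro divide_nonneg_pos) auto
  have t1': "(a - b) / P \<le> (P - Q) / P" using assms P by (intro divide_right_mono) auto
  have "b * (P - Q) \<le> Q * (P - Q)" using assms by (intro mult_right_mono) auto
  then have "b * (P - Q) / (P * Q) \<le> Q * (P - Q) / (P * Q)" using P assms(5)
    by (intro divide_right_mono) auto
  also have "\<dots> = (P - Q) / P" using P assms(5) by (simp add: field_simps)
  finally have t2': "b * (P - Q) / (P * Q) \<le> (P - Q) / P" .
  have t2: "0 \<le> b * (P - Q) / (P * Q)" using assms P by (intro divide_nonneg_pos) auto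
  have "(P - Q) / P = 1 - Q / P" using P by (simp add: field_simps)
  then show ?thesis using e t1 t1' t2 t2' by (simp add: abs_le_iff)
qed

lemma cyl_open: "open {w :: word. \<forall>i<length u. w i = u ! i}"
proof -
  have "open {f :: word. \<forall>i\<in>{..<length u}. f (id i) \<in> {u ! i}}"
    by (rule product_topology_basis') (auto intro: discrete_topology_class.open_discrete)
  moreover have "{f :: word. \<forall>i\<in>{..<length u}. f (id i) \<in> {u ! i}} = {w :: word. \<forall>i<length u. w i = u ! i}"
    by auto
  ultimately show ?thesis by simp
qed

lemma open_cyl_basis:
  assumes "open (U :: word set)" "w \<in> U"
  shows "\<exists>l. {z. \<forall>i<l. z i = w i} \<subseteq> U"
proof -
  have "openin (product_topology (\<lambda>_. euclidean) UNIV) U" using assms open_fun_def by auto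
  from product_topology_open_contains_basis[OF this assms(2)] obtain X where
    X: "w \<in> Pi\<^sub>E UNIV X" "finite {i. X i \<noteq> topspace euclidean}" "Pi\<^sub>E UNIV X \<subseteq> U"
    by auto
  have fin: "finite {i. X i \<noteq> UNIV}" using X(2) by simp
  obtain l where l: "\<forall>i \<in> {i. X i \<noteq> UNIV}. i < l" using fin finite_nat_set_iff_bounded by blast
  have "{z. \<forall>i<l. z i = w i} \<subseteq> Pi\<^sub>E UNIV X"
  proof
    fix z assume z: "z \<in> {z. \<forall>i<l. z i = w i}"
    have "z i \<in> X i" for i
    proof (cases "i < l")
      case True then show ?thesis using z X(1) by auto
    next
      case False then have "X i = UNIV" using l by auto
      then show ?thesis by simp
    qed
    then show "z \<in> Pi\<^sub>E UNIV X" by auto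
  qed
  then have "{z. \<forall>i<l. z i = w i} \<subseteq> U" using X(3) by (rule order_trans)
  then show ?thesis by (rule exI)
qed

lemma shift_cont: "continuous_on UNIV shift"
  unfolding shift_def by (intro continuous_on_coordinatewise_then_product) simp

lemma compact_alph: "compact (alph_words k)"
proof -
  have "alph_words k = PiE UNIV (\<lambda>_. {..<k})" unfolding alph_words_def by auto
  moreover have "compactin (product_topology (\<lambda>_. euclidean) UNIV) (PiE UNIV (\<lambda>_::nat. {..<k}))"
    by (subst compactin_PiE) (auto intro: finite_imp_compact)
  ultimately show ?thesis by (simp add: euclidean_product_topology)
qed

locale minL = shiftL +
  assumes minimal: "\<And>K. K \<subseteq> L \<Longrightarrow> K \<noteq> {} \<Longrightarrow> closed K \<Longrightarrow> shift ` K \<subseteq> K \<Longrightarrow> K = L"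
    and aper: "aperiodic_shift L"
    and closedL: "closed L"
begin

lemma finite_invariant_False:
  assumes "K \<subseteq> L" "K \<noteq> {}" "finite K" "shift ` K \<subseteq> K"
  shows False
proof -
  have KL: "K = L" using minimal[OF assms(1,2) finite_closed_word[OF assms(3)] assms(4)] .
  obtain w where w: "w \<in> L" using ne by auto
  let ?f = "\<lambda>j. (shift ^^ j) w"
  have "range ?f \<subseteq> L" using shift_pow_in w by auto
  then have "finite (range ?f)" using KL assms(3) finite_subset by metis
  then have "\<not> inj ?f" using infinite_UNIV_nat finite_imageD by blast
  then obtain i j where ij: "i \<noteq> j" "?f i = ?f j" unfolding inj_def by blast
  then obtain a b where ab: "a < b" "?f a = ?f b"
    by (metis linorder_neqE_nat)
  define w0 where "w0 = ?f a"
  define p where "p = b - a"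
  have p: "p > 0" using ab p_def by simp
  have pa: "p + a = b" using ab p_def by simp
  have "(shift ^^ p) w0 = (shift ^^ (p + a)) w" unfolding w0_def by (simp add: funpow_add)
  then have per: "(shift ^^ p) w0 = w0" using pa ab(2) w0_def by simp
  have perw: "\<forall>i. w0 (i + p) = w0 i" using per by (metis shift_pow)
  have w0L: "w0 \<in> L" using w0_def shift_pow_in w by auto
  let ?K = "{(shift ^^ j) w0 | j. True}"
  have "?K \<subseteq> L" using shift_pow_in w0L by auto
  moreover have "?K \<noteq> {}" by auto
  moreover have "finite ?K"
  proof -
    have "?K \<subseteq> (\<lambda>j. (shift ^^ j) w0) ` {..<p}"
    proof
      fix z assume "z \<in> ?K"
      then obtain j where j: "z = (shift ^^ j) w0" by auto
      have q: "(shift ^^ (q * p)) w0 = w0" for q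
        by (induction q) (simp_all add: funpow_add per)
      have "(shift ^^ j) w0 = (shift ^^ (j mod p + (j div p) * p)) w0" by (simp add: mod_div_mult_eq)
      also have "\<dots> = (shift ^^ (j mod p)) ((shift ^^ ((j div p) * p)) w0)" by (simp only: funpow_add comp_def)
      also have "\<dots> = (shift ^^ (j mod p)) w0" using q by simp
      finally have "(shift ^^ j) w0 = (shift ^^ (j mod p)) w0" .
      then show "z \<in> (\<lambda>j. (shift ^^ j) w0) ` {..<p}" using j p by auto
    qed
    then show ?thesis using finite_subset by blast
  qed
  moreover have "shift ` ?K \<subseteq> ?K"
  proof
    fix z assume "z \<in> shift ` ?K"
    then obtain j where "z = shift ((shift ^^ j) w0)" by auto
    then have "z = (shift ^^ Suc j) w0" by simp
    then show "z \<in> ?K" by blast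
  qed
  ultimately have "?K = L" using minimal finite_closed_word by metis
  then show False using aper p perw unfolding aperiodic_shift_def by blast
qed

lemma infinite_L: "infinite L"
  using finite_invariant_False[of L] ne inv by auto

lemma compact_L: "compact L"
proof -
  have "compact (alph_words k \<inter> L)" using compact_alph closedL by blast
  then show ?thesis using sub by (simp add: Int_absorb1)
qed

lemma shift_surj: "shift ` L = L"
proof -
  have c: "compact (shift ` L)"
    by (rule compact_continuous_image[OF continuous_on_subset[OF shift_cont] compact_L]) auto
  have "shift ` L = L"
    by (rule minimal) (use inv ne compact_closed_word[OF c] in auto)
  then show ?thesis .
qed

sublocale shiftL_surj using shift_surj by unfold_locales

lemma pL_strict: "pL L m < pL L (Suc m)"
proof (rule ccontr)
  assume "\<not> pL L m < pL L (Suc m)"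
  then have eq: "card (Fact L (Suc m)) = card (Fact L m)" using pL_mono[of m "Suc m"] unfolding pL_def by simp
  have inj: "inj_on (take m) (Fact L (Suc m))"
    by (rule eq_card_imp_inj_on[OF fin_Fact]) (use take_Fact_img[of m "Suc m"] eq in simp)
  have det: "\<forall>w \<in> L. \<forall>w' \<in> L. map w [0..<m] = map w' [0..<m] \<longrightarrow> w j = w' j" for j
  proof (induction j rule: less_induct)
    case (less j)
    show ?case
    proof (intro ballI impI)
      fix w w' assume ww: "w \<in> L" "w' \<in> L" "map w [0..<m] = map w' [0..<m]"
      show "w j = w' j"
      proof (cases "j < m")
        case True then show ?thesis using ww(3) map_eq_conv by fastforce
      next
        case False
        define z where "z = (shift ^^ (j - m)) w"
        define z' where "z' = (shift ^^ (j - m)) w'"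
        have zL: "z \<in> L" "z' \<in> L" using ww shift_pow_in z_def z'_def by auto
        have "map z [0..<m] = map z' [0..<m]"
        proof (rule map_cong[OF refl])
          fix i assume "i \<in> set [0..<m]"
          then have "i < m" by simp
          then have "i + (j - m) < j" using False by simp
          then show "z i = z' i" using less ww unfolding z_def z'_def shift_pow by blast
        qed
        then have "take m (map z [0..<Suc m]) = take m (map z' [0..<Suc m])" by (simp add: take_map)
        then have "map z [0..<Suc m] = map z' [0..<Suc m]"
          using inj Fact_mem zL unfolding inj_on_def by blast
        then have "z m = z' m" by simp
        then show ?thesis using False unfolding z_def z'_def shift_pow by simp
      qed
    qed
  qed
  have "inj_on (\<lambda>w. map w [0..<m]) L"
  proof (rule inj_onI)
    fix w w' assume "w \<in> L" "w' \<in> L" "map w [0..<m] = map w' [0..<m]"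
    then show "w = w'" using det by blast
  qed
  moreover have "(\<lambda>w. map w [0..<m]) ` L \<subseteq> Fact L m" using Fact_mem by auto
  ultimately have "finite L" using fin_Fact finite_imageD finite_subset by metis
  then show False using infinite_L by simp
qed

lemma pL_ge: "pL L m \<ge> Suc m"
proof (induction m)
  case 0 then show ?case using pL_pos by (simp add: Suc_leI)
next
  case (Suc m) then show ?case using pL_strict[of m] by simp
qed

end



locale seqL = minL +
  fixes n :: "nat \<Rightarrow> nat"
  assumes n_ge2: "\<And>s. n s \<ge> 2"
    and ratio: "(\<lambda>s. real (pL L (n s)) / real (pL L (n s - 1))) \<longlonglongrightarrow> 1"
begin

lemma n_inf: "filterlim n at_top sequentially"
proof (subst filterlim_at_top, intro allI)
  fix C :: nat
  define d where "d = 1 / real (pL L C)"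
  have d: "d > 0" using pL_pos unfolding d_def by simp
  have "\<forall>\<^sub>F s in sequentially. dist (real (pL L (n s)) / real (pL L (n s - 1))) 1 < d"
    using ratio d by (rule tendstoD)
  then show "\<forall>\<^sub>F s in sequentially. C \<le> n s"
  proof (rule eventually_mono)
    fix s assume ds: "dist (real (pL L (n s)) / real (pL L (n s - 1))) 1 < d"
    show "C \<le> n s"
    proof (rule ccontr)
      assume "\<not> C \<le> n s"
      then have le: "n s - 1 \<le> C" by simp
      have "pL L (n s - 1) < pL L (Suc (n s - 1))" by (rule pL_strict)
      also have "Suc (n s - 1) = n s" using n_ge2[of s] by simp
      finally have lt: "real (pL L (n s - 1)) + 1 \<le> real (pL L (n s))" by simp
      have q: "real (pL L (n s - 1)) > 0" using pL_pos by simp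
      have qc: "real (pL L (n s - 1)) \<le> real (pL L C)" using pL_mono[OF le] by simp
      have "1 + d \<le> 1 + 1 / real (pL L (n s - 1))" unfolding d_def using q qc
        by (simp add: frac_le)
      also have "\<dots> = (real (pL L (n s - 1)) + 1) / real (pL L (n s - 1))" using q by (simp add: field_simps)
      also have "\<dots> \<le> real (pL L (n s)) / real (pL L (n s - 1))" using lt q by (simp add: divide_right_mono)
      finally show False using ds by (simp add: dist_real_def)
    qed
  qed
qed

lemma n_sub_inf: "strict_mono r \<Longrightarrow> filterlim (\<lambda>i. n (r i)) at_top sequentially"
  using filterlim_compose[OF n_inf filterlim_subseq] by (simp add: comp_def)

lemma ev_n_ge: "strict_mono r \<Longrightarrow> \<forall>\<^sub>F i in sequentially. c \<le> n (r i)"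
  using n_sub_inf by (simp add: filterlim_at_top)

lemma inv_ratio: "strict_mono r \<Longrightarrow> (\<lambda>i. real (pL L (n (r i) - 1)) / real (pL L (n (r i)))) \<longlonglongrightarrow> 1"
proof -
  assume r: "strict_mono r"
  have "(\<lambda>s. inverse (real (pL L (n s)) / real (pL L (n s - 1)))) \<longlonglongrightarrow> inverse 1"
    by (rule tendsto_inverse[OF ratio]) simp
  then have "(\<lambda>s. real (pL L (n s - 1)) / real (pL L (n s))) \<longlonglongrightarrow> 1" by (simp only: inverse_divide inverse_1)
  from LIMSEQ_subseq_LIMSEQ[OF this r] show ?thesis by (simp add: comp_def)
qed

lemma pL_pred_inf: "strict_mono r \<Longrightarrow> filterlim (\<lambda>i. real (pL L (n (r i) - 1))) at_top sequentially"
proof -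
  assume r: "strict_mono r"
  have "filterlim (\<lambda>i. n (r i) - 1) at_top sequentially"
    unfolding filterlim_at_top
  proof
    fix C show "\<forall>\<^sub>F i in sequentially. C \<le> n (r i) - 1"
      using ev_n_ge[OF r, of "Suc C"] by (rule eventually_mono) simp
  qed
  then have "filterlim (\<lambda>i. real (n (r i) - 1)) at_top sequentially"
    using filterlim_compose[OF filterlim_real_sequentially] by (simp add: comp_def)
  then show ?thesis
  proof (rule filterlim_at_top_mono)
    show "\<forall>\<^sub>F x in sequentially. real (n (r x) - 1) \<le> real (pL L (n (r x) - 1))"
      using pL_ge by (intro always_eventually allI) (metis Suc_le_eq less_imp_le of_nat_le_iff)
  qed
qed

definition X :: "nat \<Rightarrow> nat list \<Rightarrow> real" where
  "X s u = real (pL_pref L u (n s)) / real (pL L (n s))"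

lemma X_range: "X s u \<in> {0..1}"
  unfolding X_def using pL_pref_le[of u "n s"] pL_pos[of "n s"] by auto

definition rr :: "nat \<Rightarrow> nat" where
  "rr = (SOME r. \<exists>l. strict_mono r \<and> (\<forall>u. (\<lambda>i. X (r i) u) \<longlonglongrightarrow> l u))"

definition Mu :: "nat list \<Rightarrow> real" where
  "Mu = (SOME l. strict_mono rr \<and> (\<forall>u. (\<lambda>i. X (rr i) u) \<longlonglongrightarrow> l u))"

lemma rr_Mu: "strict_mono rr \<and> (\<forall>u. (\<lambda>i. X (rr i) u) \<longlonglongrightarrow> Mu u)"
proof -
  have "\<exists>r l. strict_mono r \<and> (\<forall>u. (\<lambda>i. X (r i) u) \<longlonglongrightarrow> l u)"
    by (rule diag_subseq) (rule X_range)
  then have "\<exists>l. strict_mono rr \<and> (\<forall>u. (\<lambda>i. X (rr i) u) \<longlonglongrightarrow> l u)"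
    unfolding rr_def by (rule someI_ex)
  then show ?thesis unfolding Mu_def by (rule someI_ex)
qed

lemma rr_mono: "strict_mono rr" using rr_Mu by blast

lemma Mu_lim: "(\<lambda>i. real (pL_pref L u (n (rr i))) / real (pL L (n (rr i)))) \<longlonglongrightarrow> Mu u"
  using rr_Mu unfolding X_def by blast

lemma Mu_nonneg: "Mu u \<ge> 0"
  by (rule LIMSEQ_le_const[OF Mu_lim]) simp

lemma Mu_le1: "Mu u \<le> 1"
  by (rule LIMSEQ_le_const2[OF Mu_lim]) (use pL_pref_le pL_pos in simp)

lemma Mu_Nil: "Mu [] = 1"
proof -
  have "(\<lambda>i. real (pL_pref L [] (n (rr i))) / real (pL L (n (rr i)))) = (\<lambda>i. 1)"
  proof
    fix i have "pL L (n (rr i)) \<noteq> 0" using pL_pos[of "n (rr i)"] by simp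
    then show "real (pL_pref L [] (n (rr i))) / real (pL L (n (rr i))) = 1" by (simp add: pL_pref_Nil)
  qed
  then have "(\<lambda>i. 1::real) \<longlonglongrightarrow> Mu []" using Mu_lim[of "[]"] by simp
  then show ?thesis by (simp add: LIMSEQ_const_iff)
qed

lemma Mu_right: "Mu u = (\<Sum>a<k. Mu (u @ [a]))"
proof -
  have "(\<lambda>i. \<Sum>a<k. real (pL_pref L (u @ [a]) (n (rr i))) / real (pL L (n (rr i)))) \<longlonglongrightarrow> (\<Sum>a<k. Mu (u @ [a]))"
    by (intro tendsto_sum Mu_lim)
  moreover have "\<forall>\<^sub>F i in sequentially. (\<Sum>a<k. real (pL_pref L (u @ [a]) (n (rr i))) / real (pL L (n (rr i))))
      = real (pL_pref L u (n (rr i))) / real (pL L (n (rr i)))"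
    using ev_n_ge[OF rr_mono, of "Suc (length u)"]
  proof (rule eventually_mono)
    fix i assume "Suc (length u) \<le> n (rr i)"
    then have "pL_pref L u (n (rr i)) = (\<Sum>a<k. pL_pref L (u @ [a]) (n (rr i)))" by (intro pref_split) simp
    then show "(\<Sum>a<k. real (pL_pref L (u @ [a]) (n (rr i))) / real (pL L (n (rr i))))
      = real (pL_pref L u (n (rr i))) / real (pL L (n (rr i)))" by (simp add: sum_divide_distrib)
  qed
  ultimately have "(\<lambda>i. real (pL_pref L u (n (rr i))) / real (pL L (n (rr i)))) \<longlonglongrightarrow> (\<Sum>a<k. Mu (u @ [a]))"
    using Lim_transform_eventually by fast
  then show ?thesis using Mu_lim LIMSEQ_unique by blast
qed

lemma lim_diff_zero:
  fixes A B :: "nat \<Rightarrow> real"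
  assumes "\<forall>\<^sub>F i in sequentially. \<bar>A i - B i\<bar> \<le> 1 - real (pL L (n (rr i) - 1)) / real (pL L (n (rr i)))"
    and "A \<longlonglongrightarrow> l"
  shows "B \<longlonglongrightarrow> l"
proof -
  have z: "(\<lambda>i. 1 - real (pL L (n (rr i) - 1)) / real (pL L (n (rr i)))) \<longlonglongrightarrow> 0"
    using tendsto_diff[OF tendsto_const inv_ratio[OF rr_mono], of 1] by simp
  have "(\<lambda>i. A i - B i) \<longlonglongrightarrow> 0"
    by (rule Lim_null_comparison[OF _ z]) (use assms(1) in simp)
  from tendsto_diff[OF assms(2) this] show ?thesis by simp
qed

lemma Mu_lim1: "(\<lambda>i. real (pL_pref L u (n (rr i) - 1)) / real (pL L (n (rr i) - 1))) \<longlonglongrightarrow> Mu u"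
proof (rule lim_diff_zero[OF _ Mu_lim])
  show "\<forall>\<^sub>F i in sequentially. \<bar>real (pL_pref L u (n (rr i))) / real (pL L (n (rr i))) -
      real (pL_pref L u (n (rr i) - 1)) / real (pL L (n (rr i) - 1))\<bar>
    \<le> 1 - real (pL L (n (rr i) - 1)) / real (pL L (n (rr i)))"
    using ev_n_ge[OF rr_mono, of "Suc (length u)"]
  proof (rule eventually_mono)
    fix i assume a: "Suc (length u) \<le> n (rr i)"
    define m where "m = n (rr i) - 1"
    have nm: "n (rr i) = Suc m" using a m_def by simp
    have lm: "length u \<le> m" using a m_def by simp
    note pr = pref_right[OF lm]
    show "\<bar>real (pL_pref L u (n (rr i))) / real (pL L (n (rr i))) -
      real (pL_pref L u (n (rr i) - 1)) / real (pL L (n (rr i) - 1))\<bar>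
      \<le> 1 - real (pL L (n (rr i) - 1)) / real (pL L (n (rr i)))"
      unfolding nm m_def[symmetric] diff_Suc_1
      by (rule ratio_bound) (use pr pL_pref_le[of u m] pL_pos[of m] pL_mono[of m "Suc m"] in auto)
  qed
qed

lemma Mu_left: "Mu u = (\<Sum>a<k. Mu (a # u))"
proof -
  have s: "(\<lambda>i. \<Sum>a<k. real (pL_pref L (a # u) (n (rr i))) / real (pL L (n (rr i)))) \<longlonglongrightarrow> (\<Sum>a<k. Mu (a # u))"
    by (intro tendsto_sum Mu_lim)
  have "(\<lambda>i. real (pL_pref L u (n (rr i) - 1)) / real (pL L (n (rr i) - 1))) \<longlonglongrightarrow> (\<Sum>a<k. Mu (a # u))"
  proof (rule lim_diff_zero[OF _ s])
    show "\<forall>\<^sub>F i in sequentially. \<bar>(\<Sum>a<k. real (pL_pref L (a # u) (n (rr i))) / real (pL L (n (rr i)))) -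
      real (pL_pref L u (n (rr i) - 1)) / real (pL L (n (rr i) - 1))\<bar>
    \<le> 1 - real (pL L (n (rr i) - 1)) / real (pL L (n (rr i)))"
      using ev_n_ge[OF rr_mono, of "Suc (length u)"]
    proof (rule eventually_mono)
      fix i assume a: "Suc (length u) \<le> n (rr i)"
      define m where "m = n (rr i) - 1"
      have nm: "n (rr i) = Suc m" using a m_def by simp
      have lm: "length u \<le> m" using a m_def by simp
      note pr = pref_left[OF lm]
      have eq: "(\<Sum>a<k. real (pL_pref L (a # u) (Suc m)) / real (pL L (Suc m)))
          = real (\<Sum>a<k. pL_pref L (a # u) (Suc m)) / real (pL L (Suc m))"
        by (simp add: sum_divide_distrib)
      have pr1: "real (pL_pref L u m) \<le> real (\<Sum>a<k. pL_pref L (a # u) (Suc m))" using pr(1) by linarith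
      have pr2: "real (\<Sum>a<k. pL_pref L (a # u) (Suc m)) + real (pL L m) \<le> real (pL L (Suc m)) + real (pL_pref L u m)"
        using pr(2) by (metis of_nat_add of_nat_le_iff)
      show "\<bar>(\<Sum>a<k. real (pL_pref L (a # u) (n (rr i))) / real (pL L (n (rr i)))) -
        real (pL_pref L u (n (rr i) - 1)) / real (pL L (n (rr i) - 1))\<bar>
        \<le> 1 - real (pL L (n (rr i) - 1)) / real (pL L (n (rr i)))"
        unfolding nm m_def[symmetric] diff_Suc_1 eq
        by (rule ratio_bound) (use pr1 pr2 pL_pref_le[of u m] pL_pos[of m] pL_mono[of m "Suc m"] in auto)
    qed
  qed
  then show ?thesis using Mu_lim1 LIMSEQ_unique by blast
qed

lemma Fact_pref_empty: "u \<notin> Facts L \<Longrightarrow> Fact_pref L u m = {}"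
proof (rule ccontr)
  assume u: "u \<notin> Facts L" "Fact_pref L u m \<noteq> {}"
  then obtain v where v: "v \<in> Fact L m" "take (length u) v = u" unfolding Fact_pref_def by auto
  show False
  proof (cases "length u \<le> m")
    case True
    then have "u \<in> Fact L (length u)" using take_Fact[OF v(1) True] v(2) by simp
    then show False using u unfolding Facts_def by auto
  next
    case False
    then have "take (length u) v = v" using len_Fact[OF v(1)] by simp
    then show False using v len_Fact[OF v(1)] False by simp
  qed
qed

lemma Mu_nonfact: "u \<notin> Facts L \<Longrightarrow> Mu u = 0"
proof -
  assume u: "u \<notin> Facts L"
  have z: "pL_pref L u m = 0" for m unfolding pL_pref_def using Fact_pref_empty[OF u] by simp
  have "(\<lambda>i. real (pL_pref L u (n (rr i))) / real (pL L (n (rr i)))) = (\<lambda>i. 0)"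
    by (simp add: z)
  then have "(\<lambda>i. 0::real) \<longlonglongrightarrow> Mu u" using Mu_lim[of u] by simp
  then show ?thesis by (simp add: LIMSEQ_const_iff)
qed

end



context seqL
begin

definition Gf :: "nat list \<Rightarrow> real" where
  "Gf u = (\<Sum>i<length u. \<Sum>b<u ! i. Mu (take i u @ [b]))"

lemma Gf_Nil[simp]: "Gf [] = 0" unfolding Gf_def by simp

lemma Gf_snoc: "Gf (u @ [a]) = Gf u + (\<Sum>b<a. Mu (u @ [b]))"
proof -
  have "Gf (u @ [a]) = (\<Sum>i<Suc (length u). \<Sum>b<(u @ [a]) ! i. Mu (take i (u @ [a]) @ [b]))"
    unfolding Gf_def by simp
  also have "\<dots> = (\<Sum>i<length u. \<Sum>b<(u @ [a]) ! i. Mu (take i (u @ [a]) @ [b])) + (\<Sum>b<a. Mu (u @ [b]))"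
    by simp
  also have "(\<Sum>i<length u. \<Sum>b<(u @ [a]) ! i. Mu (take i (u @ [a]) @ [b])) = Gf u"
    unfolding Gf_def by (intro sum.cong) (auto simp: nth_append)
  finally show ?thesis .
qed

lemma Gf_nonneg: "Gf u \<ge> 0"
  unfolding Gf_def by (intro sum_nonneg) (simp add: Mu_nonneg)

lemma letter_notin_Facts: "b \<ge> k \<Longrightarrow> u @ [b] \<notin> Facts L"
proof
  assume "b \<ge> k" "u @ [b] \<in> Facts L"
  then obtain m where "u @ [b] \<in> Fact L m" unfolding Facts_def by auto
  then have "set (u @ [b]) \<subseteq> {..<k}" by (rule letters_Fact)
  then show False using \<open>b \<ge> k\<close> by auto
qed

lemma Mu_sum_le: "(\<Sum>b<c. Mu (u @ [b])) \<le> Mu u"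
proof (cases "c \<le> k")
  case True
  have "(\<Sum>b<c. Mu (u @ [b])) \<le> (\<Sum>b<k. Mu (u @ [b]))"
    by (rule sum_mono2) (use True Mu_nonneg in auto)
  then show ?thesis using Mu_right[of u] by simp
next
  case False
  have "(\<Sum>b<c. Mu (u @ [b])) = (\<Sum>b<k. Mu (u @ [b])) + (\<Sum>b\<in>{k..<c}. Mu (u @ [b]))"
    using False by (metis linorder_le_cases sum.atLeastLessThan_concat lessThan_atLeast0 zero_le)
  also have "(\<Sum>b\<in>{k..<c}. Mu (u @ [b])) = 0"
    by (intro sum.neutral) (auto intro!: Mu_nonfact letter_notin_Facts)
  finally show ?thesis using Mu_right[of u] by simp
qed

lemma Mu_snoc_le: "Mu (u @ [a]) \<le> Mu u"
  using Mu_sum_le[where c="Suc a" and u=u] sum_nonneg[of "{..<a}" "\<lambda>b. Mu (u @ [b])"] Mu_nonneg by simp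

lemma nest_snoc: "Gf (u @ [a]) + Mu (u @ [a]) \<le> Gf u + Mu u"
  using Gf_snoc[of u a] Mu_sum_le[where c="Suc a" and u=u] by simp

lemma nest_take: "Gf u + Mu u \<le> Gf (take j u) + Mu (take j u)"
proof (induction u rule: rev_induct)
  case Nil then show ?case by simp
next
  case (snoc a u)
  show ?case
  proof (cases "j \<le> length u")
    case True
    then have "take j (u @ [a]) = take j u" by simp
    then show ?thesis using snoc nest_snoc[of u a] by simp
  next
    case False then show ?thesis by simp
  qed
qed

lemma Gf_take_le: "Gf (take j u) \<le> Gf u"
proof (cases "j \<le> length u")
  case True
  have "Gf (take j u) = (\<Sum>i<j. \<Sum>b<u ! i. Mu (take i u @ [b]))"
    unfolding Gf_def using True by (intro sum.cong) (auto simp: min_def)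
  also have "\<dots> \<le> Gf u" unfolding Gf_def
    by (rule sum_mono2) (use True in \<open>auto intro!: sum_nonneg simp: Mu_nonneg\<close>)
  finally show ?thesis .
next
  case False then show ?thesis by simp
qed

lemma Gf_Mu_le1: "Gf u + Mu u \<le> 1"
  using nest_take[of u 0] Mu_Nil by simp

lemma sep:
  assumes "length u = length u'" "list_lex_less u u'"
  shows "Gf u + Mu u \<le> Gf u'"
proof -
  obtain i where i: "i < length u" "take i u = take i u'" "u ! i < u' ! i"
    using assms unfolding list_lex_less_def by auto
  define c where "c = take i u"
  have tu: "take (Suc i) u = c @ [u ! i]" using i c_def by (simp add: take_Suc_conv_app_nth)
  have tu': "take (Suc i) u' = c @ [u' ! i]" using i c_def assms(1) by (simp add: take_Suc_conv_app_nth)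
  have "Gf u + Mu u \<le> Gf (c @ [u ! i]) + Mu (c @ [u ! i])" using nest_take[of u "Suc i"] tu by simp
  also have "\<dots> = Gf c + (\<Sum>b<Suc (u ! i). Mu (c @ [b]))" using Gf_snoc by simp
  also have "\<dots> \<le> Gf c + (\<Sum>b<u' ! i. Mu (c @ [b]))"
  proof -
    have "(\<Sum>b<Suc (u ! i). Mu (c @ [b])) \<le> (\<Sum>b<u' ! i. Mu (c @ [b]))"
      by (rule sum_mono2) (use i(3) in \<open>auto simp: Mu_nonneg\<close>)
    then show ?thesis by simp
  qed
  also have "\<dots> = Gf (take (Suc i) u')" using tu' Gf_snoc by simp
  also have "\<dots> \<le> Gf u'" by (rule Gf_take_le)
  finally show ?thesis .
qed

definition In :: "real \<Rightarrow> nat list \<Rightarrow> bool" where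
  "In x u \<longleftrightarrow> Gf u \<le> x \<and> x < Gf u + Mu u"

lemma In_unique: "length u = length u' \<Longrightarrow> In x u \<Longrightarrow> In x u' \<Longrightarrow> u = u'"
proof (rule ccontr)
  assume a: "length u = length u'" "In x u" "In x u'" "u \<noteq> u'"
  then have "list_lex_less u u' \<or> list_lex_less u' u" using lex_total by blast
  then show False
  proof
    assume "list_lex_less u u'"
    then have "Gf u + Mu u \<le> Gf u'" using sep a(1) by blast
    then show False using a(2,3) unfolding In_def by linarith
  next
    assume "list_lex_less u' u"
    then have "Gf u' + Mu u' \<le> Gf u" using sep a(1) by metis
    then show False using a(2,3) unfolding In_def by linarith
  qed
qed

fun pre :: "real \<Rightarrow> nat \<Rightarrow> nat list" where
  "pre x 0 = []"
| "pre x (Suc l) = pre x l @ [LEAST a. x < Gf (pre x l @ [a]) + Mu (pre x l @ [a])]"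

lemma pre_len[simp]: "length (pre x l) = l" by (induction l) auto

lemma pre_In: "0 \<le> x \<Longrightarrow> x < 1 \<Longrightarrow> In x (pre x l) \<and> set (pre x l) \<subseteq> {..<k}"
proof (induction l)
  case 0 then show ?case using Mu_Nil unfolding In_def by simp
next
  case (Suc l)
  define u where "u = pre x l"
  define P where "P = (\<lambda>a. x < Gf (u @ [a]) + Mu (u @ [a]))"
  define a where "a = (LEAST a. P a)"
  have IH: "In x u" "set u \<subseteq> {..<k}" using Suc u_def by auto
  have Pk: "P (k - 1)"
  proof -
    have "Gf (u @ [k - 1]) + Mu (u @ [k - 1]) = Gf u + (\<Sum>b<Suc (k - 1). Mu (u @ [b]))"
      using Gf_snoc by simp
    also have "Suc (k - 1) = k" using k_pos by simp
    finally show ?thesis using IH Mu_right[of u] unfolding P_def In_def by simp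
  qed
  have Pa: "P a" using LeastI[of P, OF Pk] a_def by simp
  have ak: "a < k" using Least_le[of P, OF Pk] a_def k_pos by simp
  have "Gf (u @ [a]) \<le> x"
  proof (cases a)
    case 0 then show ?thesis using IH Gf_snoc[of u 0] unfolding In_def by simp
  next
    case (Suc a')
    have "\<not> P a'" using not_less_Least[of a' P] Suc a_def by simp
    moreover have "Gf (u @ [a]) = Gf (u @ [a']) + Mu (u @ [a'])" using Suc Gf_snoc by simp
    ultimately show ?thesis unfolding P_def by simp
  qed
  then have I: "In x (u @ [a])" using Pa unfolding In_def P_def by simp
  have e: "pre x (Suc l) = u @ [a]" unfolding a_def P_def u_def by simp
  show ?case unfolding e using I IH ak by simp
qed

lemma pre_take: "m \<le> l \<Longrightarrow> take m (pre x l) = pre x m"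
proof (induction l)
  case 0 then show ?case by simp
next
  case (Suc l)
  show ?case
  proof (cases "m = Suc l")
    case True then show ?thesis using pre_len[of x "Suc l"] by (metis take_all order_refl)
  next
    case False then have "m \<le> l" using Suc by simp
    then show ?thesis using Suc by (simp add: pre_len)
  qed
qed

lemma pre_unique: "0 \<le> x \<Longrightarrow> x < 1 \<Longrightarrow> In x u \<Longrightarrow> pre x (length u) = u"
  using In_unique pre_In pre_len by metis

definition psi :: "real \<Rightarrow> word" where
  "psi x = (\<lambda>i. pre x (Suc i) ! i)"

lemma psi_pre: "map (psi x) [0..<l] = pre x l"
proof (rule nth_equalityI)
  show "length (map (psi x) [0..<l]) = length (pre x l)" by simp
  fix i assume "i < length (map (psi x) [0..<l])"
  then have i: "i < l" by simp
  have "pre x (Suc i) = take (Suc i) (pre x l)" using pre_take[of "Suc i" l x] i by simp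
  then have "pre x (Suc i) ! i = pre x l ! i" using i by simp
  then show "map (psi x) [0..<l] ! i = pre x l ! i" using i unfolding psi_def by simp
qed

lemma Mu_pos_Facts: "Mu u > 0 \<Longrightarrow> u \<in> Fact L (length u)"
proof -
  assume "Mu u > 0"
  then have "u \<in> Facts L" using Mu_nonfact by force
  then obtain m where "u \<in> Fact L m" unfolding Facts_def by auto
  then show ?thesis using len_Fact by auto
qed

lemma cylset_in_closed:
  assumes "\<And>l. \<exists>z \<in> L. map z [0..<l] = map w [0..<l]"
  shows "w \<in> L"
proof (rule ccontr)
  assume "w \<notin> L"
  then have "open (- L)" "w \<in> - L" using closedL by auto
  then obtain l where l: "{z. \<forall>i<l. z i = w i} \<subseteq> - L" using open_cyl_basis by blast
  obtain z where z: "z \<in> L" "map z [0..<l] = map w [0..<l]" using assms by blast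
  then have "\<forall>i<l. z i = w i" by (simp add: map_eq_conv)
  then show False using l z(1) by auto
qed

lemma psi_in: "0 \<le> x \<Longrightarrow> x < 1 \<Longrightarrow> psi x \<in> L"
proof (rule cylset_in_closed)
  fix l assume x: "0 \<le> x" "x < 1"
  have "Mu (pre x l) > 0" using pre_In[OF x, of l] unfolding In_def by simp
  then have "pre x l \<in> Fact L l" using Mu_pos_Facts by force
  then show "\<exists>z\<in>L. map z [0..<l] = map (psi x) [0..<l]" unfolding psi_pre using Fact_eq by auto
qed

lemma psi_In: "0 \<le> x \<Longrightarrow> x < 1 \<Longrightarrow> In x (map (psi x) [0..<l])"
  using pre_In psi_pre by simp

lemma psi_cyl_iff: "0 \<le> x \<Longrightarrow> x < 1 \<Longrightarrow> map (psi x) [0..<length u] = u \<longleftrightarrow> In x u"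
  using psi_In psi_pre pre_unique by metis

end



definition cylset :: "nat list \<Rightarrow> word set" where
  "cylset u = {w. \<forall>i<length u. w i = u ! i}"

lemma cylset_map: "w \<in> cylset u \<longleftrightarrow> map w [0..<length u] = u"
proof
  assume "w \<in> cylset u" then show "map w [0..<length u] = u"
    by (intro nth_equalityI) (auto simp: cylset_def)
next
  assume a: "map w [0..<length u] = u"
  have "w i = u ! i" if "i < length u" for i
  proof -
    have "map w [0..<length u] ! i = w i" using that by simp
    then show ?thesis using a by simp
  qed
  then show "w \<in> cylset u" unfolding cylset_def by blast
qed

lemma cylset_open: "open (cylset u)" unfolding cylset_def by (rule cyl_open)

lemma Cyl_eq: "Cyl L u = L \<inter> cylset u" unfolding Cyl_def cylset_def by auto

lemma sets_borel_word: "sets (borel :: word measure) = sigma_sets UNIV (range cylset)"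
proof -
  have "sigma_sets UNIV {S :: word set. open S} = sigma_sets UNIV (range cylset)"
  proof (rule sigma_sets_eqI)
    fix a :: "word set" assume "a \<in> {S. open S}"
    then have oa: "open a" by simp
    have eq: "a = \<Union> {cylset u | u. cylset u \<subseteq> a}"
    proof
      show "a \<subseteq> \<Union> {cylset u | u. cylset u \<subseteq> a}"
      proof
        fix w assume "w \<in> a"
        then obtain l where l: "{z. \<forall>i<l. z i = w i} \<subseteq> a" using open_cyl_basis oa by blast
        have "cylset (map w [0..<l]) = {z. \<forall>i<l. z i = w i}" unfolding cylset_def by auto
        then have "cylset (map w [0..<l]) \<subseteq> a" using l by simp
        then have c: "cylset (map w [0..<l]) \<in> {cylset u | u. cylset u \<subseteq> a}" by blast
        have "w \<in> cylset (map w [0..<l])" by (simp add: cylset_map)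
        with c show "w \<in> \<Union> {cylset u | u. cylset u \<subseteq> a}" by (rule UnionI)
      qed
      show "\<Union> {cylset u | u. cylset u \<subseteq> a} \<subseteq> a" by blast
    qed
    have "countable {cylset u | u. cylset u \<subseteq> a}"
    proof -
      have "{cylset u | u. cylset u \<subseteq> a} \<subseteq> range cylset" by auto
      moreover have "countable (range cylset)" by (rule countable_image) simp
      ultimately show ?thesis by (rule countable_subset)
    qed
    moreover have "{cylset u | u. cylset u \<subseteq> a} \<subseteq> sigma_sets UNIV (range cylset)"
      by (auto intro: sigma_sets.Basic)
    ultimately have "\<Union> {cylset u | u. cylset u \<subseteq> a} \<in> sigma_sets UNIV (range cylset)"
      by (intro sigma_algebra.countable_Union[OF sigma_algebra_sigma_sets]) auto
    then show "a \<in> sigma_sets UNIV (range cylset)" using eq by simp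
  next
    fix b assume "b \<in> range cylset"
    then show "b \<in> sigma_sets UNIV {S. open S}" using cylset_open by auto
  qed
  then show ?thesis by (simp add: sets_borel)
qed

lemma word_irrefl: "\<not> word_less w w" unfolding word_less_def by auto

lemma word_asym: "word_less w w' \<Longrightarrow> \<not> word_less w' w"
proof
  assume "word_less w w'" "word_less w' w"
  then obtain i j where i: "\<forall>j<i. w j = w' j" "w i < w' i" and j: "\<forall>i<j. w' i = w i" "w' j < w j"
    unfolding word_less_def by blast
  show False by (cases i j rule: linorder_cases) (use i j in auto)
qed

lemma word_total: "w \<noteq> w' \<Longrightarrow> word_less w w' \<or> word_less w' w"
proof -
  assume "w \<noteq> w'"
  then have ex: "\<exists>i. w i \<noteq> w' i" by auto
  define i where "i = (LEAST i. w i \<noteq> w' i)"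
  have "w i \<noteq> w' i" using LeastI_ex[OF ex] i_def by simp
  moreover have "\<forall>j<i. w j = w' j" using not_less_Least i_def by blast
  ultimately show ?thesis unfolding word_less_def by (metis linorder_neqE_nat)
qed

lemma word_less_pref: "word_less w w' \<longleftrightarrow> (\<exists>l. list_lex_less (map w [0..<l]) (map w' [0..<l]))"
proof
  assume "word_less w w'"
  then obtain i where i: "\<forall>j<i. w j = w' j" "w i < w' i" unfolding word_less_def by blast
  have "take i (map w [0..<Suc i]) = take i (map w' [0..<Suc i])" using i(1) by (simp add: take_map)
  then show "\<exists>l. list_lex_less (map w [0..<l]) (map w' [0..<l])"
    using i(2) unfolding list_lex_less_def by (intro exI[of _ "Suc i"] exI[of _ i]) (simp del: upt_Suc)
next
  assume "\<exists>l. list_lex_less (map w [0..<l]) (map w' [0..<l])"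
  then obtain l i where "i < l" "take i (map w [0..<l]) = take i (map w' [0..<l])" "w i < w' i"
    unfolding list_lex_less_def by auto
  then have "\<forall>j<i. w j = w' j" "w i < w' i" by (auto simp: take_map min_def map_eq_conv)
  then show "word_less w w'" unfolding word_less_def by blast
qed

context seqL
begin

lemma Cyl_Cons_shift: "shift -` Cyl L u \<inter> L = (\<Union>a<k. Cyl L (a # u))"
proof
  show "shift -` Cyl L u \<inter> L \<subseteq> (\<Union>a<k. Cyl L (a # u))"
  proof
    fix w assume w: "w \<in> shift -` Cyl L u \<inter> L"
    then have "w 0 < k" using letter by auto
    moreover have "w \<in> Cyl L (w 0 # u)" using w unfolding Cyl_def shift_def
      by (auto simp: nth_Cons split: nat.split)
    ultimately show "w \<in> (\<Union>a<k. Cyl L (a # u))" by blast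
  qed
  show "(\<Union>a<k. Cyl L (a # u)) \<subseteq> shift -` Cyl L u \<inter> L"
  proof
    fix w assume "w \<in> (\<Union>a<k. Cyl L (a # u))"
    then obtain a where "w \<in> Cyl L (a # u)" by auto
    then show "w \<in> shift -` Cyl L u \<inter> L" unfolding Cyl_def shift_def using shift_in
      by (auto simp: shift_def)
  qed
qed

lemma L_sets: "L \<in> sigma_sets UNIV (range cylset)"
  using closedL sets_borel_word by (metis borel_closed)

lemma sets_restr: "sets (restrict_space borel L) = sigma_sets L (range (Cyl L))"
proof -
  have "sets (restrict_space borel L) = (\<inter>) L ` sigma_sets UNIV (range cylset)"
    unfolding sets_restrict_space sets_borel_word by simp
  also have "\<dots> = sigma_sets L ((\<inter>) L ` range cylset)"
    by (rule sigma_sets_Int[OF L_sets]) simp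
  also have "(\<inter>) L ` range cylset = range (Cyl L)" by (auto simp: Cyl_eq)
  finally show ?thesis .
qed

definition M0 :: "real measure" where "M0 = restrict_space lborel {0..<1}"

lemma space_M0: "space M0 = {0..<1}" unfolding M0_def by (simp add: space_restrict_space)

lemma sets_M0: "A \<subseteq> {0..<1} \<Longrightarrow> A \<in> sets lborel \<Longrightarrow> A \<in> sets M0"
  unfolding M0_def by (subst sets_restrict_space_iff) auto

lemma measure_M0: "A \<subseteq> {0..<1} \<Longrightarrow> measure M0 A = measure lborel A"
  unfolding M0_def by (rule measure_restrict_space) auto

lemma prob_M0: "prob_space M0"
proof
  have "emeasure M0 (space M0) = emeasure lborel {0..<1::real}"
    unfolding M0_def by (subst emeasure_restrict_space) (auto simp: space_restrict_space)
  then show "emeasure M0 (space M0) = 1" by simp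
qed

lemma In_set: "{x \<in> {0..<1}. In x u} = {Gf u..<Gf u + Mu u}"
  using Gf_nonneg[of u] Gf_Mu_le1[of u] unfolding In_def by auto

lemma psi_pre_Cyl: "psi -` Cyl L u \<inter> {0..<1} = {Gf u..<Gf u + Mu u}"
proof -
  have "psi -` Cyl L u \<inter> {0..<1} = {x \<in> {0..<1}. In x u}"
    using psi_in psi_cyl_iff by (auto simp: Cyl_eq cylset_map)
  then show ?thesis using In_set by simp
qed

lemma psi_meas: "psi \<in> M0 \<rightarrow>\<^sub>M restrict_space borel L"
proof (rule measurable_sigma_sets[OF sets_restr])
  show "range (Cyl L) \<subseteq> Pow L" unfolding Cyl_def by auto
  show "psi \<in> space M0 \<rightarrow> L" using psi_in space_M0 by auto
  fix y assume "y \<in> range (Cyl L)"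
  then obtain u where "y = Cyl L u" by auto
  then have "psi -` y \<inter> space M0 = {Gf u..<Gf u + Mu u}" using psi_pre_Cyl space_M0 by simp
  moreover have "{Gf u..<Gf u + Mu u} \<subseteq> {0..<1}" using In_set by blast
  ultimately show "psi -` y \<inter> space M0 \<in> sets M0" using sets_M0 by simp
qed

definition mu :: "word measure" where "mu = distr M0 (restrict_space borel L) psi"

lemma prob_mu: "prob_space mu"
  unfolding mu_def by (rule prob_space.prob_space_distr[OF prob_M0 psi_meas])

lemma sets_mu: "sets mu = sets (restrict_space borel L)" unfolding mu_def by simp

lemma sets_mu': "sets mu = sigma_sets L (range (Cyl L))" using sets_mu sets_restr by simp

lemma space_mu: "space mu = L"
  unfolding mu_def by (simp add: space_restrict_space)

lemma measure_mu: "B \<in> sets mu \<Longrightarrow> measure mu B = measure lborel (psi -` B \<inter> {0..<1})"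
proof -
  assume B: "B \<in> sets mu"
  have "measure mu B = measure M0 (psi -` B \<inter> space M0)"
    unfolding mu_def by (rule measure_distr[OF psi_meas]) (use B sets_mu in simp)
  then show ?thesis using measure_M0 space_M0 by simp
qed

lemma Cyl_sets: "Cyl L u \<in> sets mu" using sets_mu' by auto

lemma mu_cyl: "measure mu (Cyl L u) = Mu u"
proof -
  have "measure mu (Cyl L u) = measure lborel {Gf u..<Gf u + Mu u}"
    using measure_mu[OF Cyl_sets] psi_pre_Cyl by simp
  also have "\<dots> = Mu u" using Mu_nonneg[of u] by (simp add: measure_def)
  finally show ?thesis .
qed

lemma shift_meas: "shift \<in> restrict_space borel L \<rightarrow>\<^sub>M restrict_space borel L"
proof (rule measurable_restrict_space2)
  show "shift \<in> space (restrict_space borel L) \<rightarrow> L" using shift_in by (auto simp: space_restrict_space)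
  show "shift \<in> restrict_space borel L \<rightarrow>\<^sub>M borel"
    by (rule measurable_restrict_space1) (rule borel_measurable_continuous_onI[OF shift_cont])
qed

lemma Cyl_k_empty: "Cyl L [k] = {}" unfolding Cyl_def using letter by fastforce

lemma Cyl_Int: "Cyl L u \<inter> Cyl L u' \<in> range (Cyl L)"
proof (cases "\<exists>i<min (length u) (length u'). u ! i \<noteq> u' ! i")
  case True
  then have "Cyl L u \<inter> Cyl L u' = Cyl L [k]" unfolding Cyl_k_empty unfolding Cyl_def by auto
  then show ?thesis by blast
next
  case False
  show ?thesis
  proof (cases "length u \<le> length u'")
    case True
    then have "Cyl L u \<inter> Cyl L u' = Cyl L u'" using False unfolding Cyl_def by auto
    then show ?thesis by blast
  next
    case F2: False
    then have "Cyl L u \<inter> Cyl L u' = Cyl L u" using False unfolding Cyl_def by auto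
    then show ?thesis by blast
  qed
qed

lemma mu_shift_cyl: "measure mu (shift -` Cyl L u \<inter> L) = measure mu (Cyl L u)"
proof -
  interpret P: prob_space mu by (rule prob_mu)
  have "measure mu (shift -` Cyl L u \<inter> L) = measure mu (\<Union>a<k. Cyl L (a # u))"
    using Cyl_Cons_shift by simp
  also have "\<dots> = (\<Sum>a<k. measure mu (Cyl L (a # u)))"
  proof (rule measure_finite_Union)
    show "disjoint_family_on (\<lambda>a. Cyl L (a # u)) {..<k}"
    proof (unfold disjoint_family_on_def, intro ballI impI)
      fix a b :: nat assume "a \<in> {..<k}" "b \<in> {..<k}" "a \<noteq> b"
      have "\<And>c w. w \<in> Cyl L (c # u) \<Longrightarrow> w 0 = c" unfolding Cyl_def by fastforce
      then show "Cyl L (a # u) \<inter> Cyl L (b # u) = {}" using \<open>a \<noteq> b\<close> by blast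
    qed
    show "(\<lambda>a. Cyl L (a # u)) ` {..<k} \<subseteq> sets mu" using Cyl_sets by blast
  qed (auto simp: P.emeasure_eq_measure)
  also have "\<dots> = Mu u" using Mu_left[of u] mu_cyl by simp
  finally show ?thesis using mu_cyl by simp
qed

lemma mu_invariant: "distr mu (restrict_space borel L) shift = mu"
proof -
  interpret P: prob_space mu by (rule prob_mu)
  let ?nu = "distr mu (restrict_space borel L) shift"
  have sm: "shift \<in> mu \<rightarrow>\<^sub>M restrict_space borel L"
    using shift_meas measurable_cong_sets[OF sets_mu refl] by blast
  interpret Q: prob_space ?nu by (rule P.prob_space_distr[OF sm])
  show ?thesis
  proof (rule measure_eqI_generator_eq[where E = "range (Cyl L)" and \<Omega> = L and A = "\<lambda>_. L"])
    show "Int_stable (range (Cyl L))" unfolding Int_stable_def using Cyl_Int by blast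
    show "range (Cyl L) \<subseteq> Pow L" unfolding Cyl_def by auto
    show "sets ?nu = sigma_sets L (range (Cyl L))" using sets_restr by simp
    show "sets mu = sigma_sets L (range (Cyl L))" by (rule sets_mu')
    have CN: "Cyl L [] = L" unfolding Cyl_def by simp
    show "range (\<lambda>_. L) \<subseteq> range (Cyl L)"
      by (rule image_subsetI) (metis CN rangeI)
    show "(\<Union>i::nat. L) = L" by simp
    fix X assume "X \<in> range (Cyl L)"
    then obtain u where X: "X = Cyl L u" by auto
    have "measure ?nu X = measure mu (shift -` X \<inter> space mu)"
      by (rule measure_distr[OF sm]) (use X Cyl_sets sets_mu in simp)
    also have "\<dots> = measure mu X" using X mu_shift_cyl space_mu by simp
    finally show "emeasure ?nu X = emeasure mu X"
      by (simp add: P.emeasure_eq_measure Q.emeasure_eq_measure)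
  qed (simp add: Q.emeasure_eq_measure)
qed

lemma shift_inv_mu: "shift_invariant L mu"
  unfolding shift_invariant_def
proof
  fix B assume B: "B \<in> sets mu"
  have sm: "shift \<in> mu \<rightarrow>\<^sub>M restrict_space borel L"
    using shift_meas measurable_cong_sets[OF sets_mu refl] by blast
  have "measure mu (shift -` B \<inter> L) = measure (distr mu (restrict_space borel L) shift) B"
    using measure_distr[OF sm, of B] B sets_mu space_mu by simp
  then show "measure mu (shift -` B \<inter> L) = measure mu B" using mu_invariant by simp
qed

lemma borel_prob_mu: "borel_prob_on L mu"
  unfolding borel_prob_on_def using prob_mu sets_mu by simp

end



lemma inj_prefix:
  assumes "finite (F :: word set)"
  shows "\<exists>l. inj_on (\<lambda>w. map w [0..<l]) F"
proof -
  define d where "d = (\<lambda>(w::word, w'::word). LEAST i. w i \<noteq> w' i)"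
  define D where "D = d ` (F \<times> F)"
  have fD: "finite D" unfolding D_def using assms by simp
  define l where "l = Suc (Max (insert 0 D))"
  have "inj_on (\<lambda>w. map w [0..<l]) F"
  proof (rule inj_onI, rule ccontr)
    fix w w' assume ww: "w \<in> F" "w' \<in> F" "map w [0..<l] = map w' [0..<l]" "w \<noteq> w'"
    then have ex: "\<exists>i. w i \<noteq> w' i" by auto
    have dw: "w (d (w, w')) \<noteq> w' (d (w, w'))" unfolding d_def using LeastI_ex[OF ex] by simp
    have "d (w, w') \<in> D" unfolding D_def using ww by auto
    then have "d (w, w') \<le> Max (insert 0 D)" using fD by simp
    then have "d (w, w') < l" unfolding l_def by simp
    then show False using ww(3) dw by (simp add: map_eq_conv)
  qed
  then show ?thesis by blast
qed

context seqL
begin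

lemma Mu_sum_le1:
  assumes "finite U" "\<forall>u \<in> U. length u = l"
  shows "(\<Sum>u\<in>U. Mu u) \<le> 1"
proof -
  interpret P: prob_space mu by (rule prob_mu)
  have "(\<Sum>u\<in>U. Mu u) = (\<Sum>u\<in>U. measure mu (Cyl L u))" using mu_cyl by simp
  also have "\<dots> = measure mu (\<Union>u\<in>U. Cyl L u)"
  proof (rule measure_finite_Union[symmetric])
    show "finite U" by (rule assms(1))
    show "(\<lambda>u. Cyl L u) ` U \<subseteq> sets mu" using Cyl_sets by blast
    show "disjoint_family_on (Cyl L) U"
    proof (unfold disjoint_family_on_def, intro ballI impI)
      fix u u' assume uu: "u \<in> U" "u' \<in> U" "u \<noteq> u'"
      then have "length u = length u'" using assms by simp
      then obtain i where i: "i < length u" "u ! i \<noteq> u' ! i" using uu(3) nth_equalityI by blast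
      show "Cyl L u \<inter> Cyl L u' = {}"
      proof (rule ccontr)
        assume "Cyl L u \<inter> Cyl L u' \<noteq> {}"
        then obtain w where "w \<in> Cyl L u" "w \<in> Cyl L u'" by blast
        then have "w i = u ! i" "w i = u' ! i" using i \<open>length u = length u'\<close> unfolding Cyl_def by auto
        then show False using i by simp
      qed
    qed
  qed (simp add: P.emeasure_eq_measure)
  also have "\<dots> \<le> 1" by simp
  finally show ?thesis .
qed

definition aF :: "word \<Rightarrow> real" where
  "aF w = (INF l. Mu (map w [0..<l]))"

lemma bdd_Mu: "bdd_below (range (\<lambda>l. Mu (map w [0..<l])))"
  by (rule bdd_belowI[of _ 0]) (auto simp: Mu_nonneg)

lemma aF_le: "aF w \<le> Mu (map w [0..<l])"
  unfolding aF_def by (rule cINF_lower[OF bdd_Mu]) simp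

lemma aF_ge: "(\<And>l. c \<le> Mu (map w [0..<l])) \<Longrightarrow> c \<le> aF w"
  unfolding aF_def by (rule cINF_greatest) auto

lemma aF_nonneg: "aF w \<ge> 0" using aF_ge Mu_nonneg by blast

lemma Mu_Cons_le: "a < k \<Longrightarrow> Mu (a # v) \<le> Mu v"
proof -
  assume "a < k"
  then have "Mu (a # v) \<le> (\<Sum>b<k. Mu (b # v))"
    by (intro member_le_sum) (auto simp: Mu_nonneg)
  then show ?thesis using Mu_left[of v] by simp
qed

lemma map_Suc_shift: "map w [0..<Suc l] = w 0 # map (shift w) [0..<l]"
  by (simp add: shift_def upt_conv_Cons map_Suc_upt[symmetric] comp_def del: upt_Suc)

lemma aF_shift: "w \<in> L \<Longrightarrow> aF w \<le> aF (shift w)"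
proof (rule aF_ge)
  fix l assume "w \<in> L"
  have "aF w \<le> Mu (map w [0..<Suc l])" by (rule aF_le)
  also have "\<dots> \<le> Mu (map (shift w) [0..<l])" unfolding map_Suc_shift
    by (rule Mu_Cons_le[OF letter[OF \<open>w \<in> L\<close>, of 0]])
  finally show "aF w \<le> Mu (map (shift w) [0..<l])" .
qed

lemma finite_big:
  assumes e: "e > 0"
  shows "finite {w \<in> L. e \<le> aF w}"
proof (rule ccontr)
  assume inf: "infinite {w \<in> L. e \<le> aF w}"
  define N where "N = Suc (nat \<lceil>1 / e\<rceil>)"
  obtain F where F: "F \<subseteq> {w \<in> L. e \<le> aF w}" "finite F" "card F = N"
    using infinite_arbitrarily_large[OF inf] by blast
  obtain l where inj: "inj_on (\<lambda>w. map w [0..<l]) F" using inj_prefix[OF F(2)] by blast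
  have "real N * e = (\<Sum>w\<in>F. e)" using F(3) by simp
  also have "\<dots> \<le> (\<Sum>w\<in>F. Mu (map w [0..<l]))"
  proof (rule sum_mono)
    fix w assume "w \<in> F"
    then have "e \<le> aF w" using F(1) by blast
    then show "e \<le> Mu (map w [0..<l])" using aF_le[of w l] by linarith
  qed
  also have "\<dots> = (\<Sum>u\<in>(\<lambda>w. map w [0..<l]) ` F. Mu u)"
    by (rule sum.reindex[OF inj, symmetric, unfolded comp_def])
  also have "\<dots> \<le> 1" by (rule Mu_sum_le1[where l = l]) (use F(2) in auto)
  finally have le: "real N * e \<le> 1" .
  have "real N > 1 / e" unfolding N_def by linarith
  then have "real N * e > 1" using e by (simp add: field_simps)
  then show False using le by simp
qed

lemma aF_zero: "w \<in> L \<Longrightarrow> aF w = 0"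
proof (rule ccontr)
  assume w: "w \<in> L" "aF w \<noteq> 0"
  define e where "e = aF w"
  have e: "e > 0" using w aF_nonneg e_def by (simp add: order_le_neq_trans)
  define S where "S = {w \<in> L. e \<le> aF w}"
  have fS: "finite S" unfolding S_def by (rule finite_big[OF e])
  have wS: "w \<in> S" unfolding S_def e_def using w by simp
  define m where "m = Max (aF ` S)"
  have mS: "m \<in> aF ` S" unfolding m_def using fS wS by (intro Max_in) auto
  have mge: "\<And>z. z \<in> S \<Longrightarrow> aF z \<le> m" unfolding m_def using fS by simp
  have em: "e \<le> m" using mge[OF wS] e_def by simp
  define A where "A = {z \<in> L. aF z = m}"
  have AS: "A \<subseteq> S" unfolding A_def S_def using em by auto
  show False
  proof (rule finite_invariant_False[of A])
    show "A \<subseteq> L" unfolding A_def by auto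
    show "A \<noteq> {}" using mS unfolding A_def S_def by auto
    show "finite A" using AS fS finite_subset by blast
    show "shift ` A \<subseteq> A"
    proof
      fix y assume "y \<in> shift ` A"
      then obtain z where z: "z \<in> A" "y = shift z" by auto
      have zL: "z \<in> L" using z A_def by auto
      have "aF z \<le> aF y" using aF_shift[OF zL] z by simp
      then have "m \<le> aF y" using z A_def by simp
      moreover have yL: "y \<in> L" using shift_in zL z by simp
      ultimately have "y \<in> S" unfolding S_def using em by simp
      then have "aF y \<le> m" by (rule mge)
      then show "y \<in> A" unfolding A_def using \<open>m \<le> aF y\<close> yL by simp
    qed
  qed
qed

lemma Mu_take_ge: "Mu u \<le> Mu (take j u)"
proof (induction u rule: rev_induct)
  case Nil then show ?case by simp
next
  case (snoc a u)
  show ?case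
  proof (cases "j \<le> length u")
    case True
    then show ?thesis using snoc Mu_snoc_le[of u a] by simp
  next
    case False then show ?thesis by simp
  qed
qed

lemma Mu_pref_small:
  assumes "w \<in> L" "e > 0"
  shows "\<exists>l0. \<forall>l\<ge>l0. Mu (map w [0..<l]) < e"
proof -
  have "aF w < e" using aF_zero[OF assms(1)] assms(2) by simp
  then obtain l0 where l0: "Mu (map w [0..<l0]) < e"
    unfolding aF_def using cINF_less_iff[OF UNIV_not_empty bdd_Mu] by blast
  have "Mu (map w [0..<l]) < e" if "l \<ge> l0" for l
  proof -
    have "take l0 (map w [0..<l]) = map w [0..<l0]" using that by (simp add: take_map min_def)
    then have "Mu (map w [0..<l]) \<le> Mu (map w [0..<l0])" using Mu_take_ge[of "map w [0..<l]" l0] by simp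
    then show ?thesis using l0 by simp
  qed
  then show ?thesis by blast
qed

lemma Mu_pref_lim: "w \<in> L \<Longrightarrow> (\<lambda>l. Mu (map w [0..<l])) \<longlonglongrightarrow> 0"
proof (rule LIMSEQ_I)
  fix r :: real assume w: "w \<in> L" and r: "0 < r"
  obtain l0 where "\<forall>l\<ge>l0. Mu (map w [0..<l]) < r" using Mu_pref_small[OF w r] by blast
  then show "\<exists>no. \<forall>l\<ge>no. norm (Mu (map w [0..<l]) - 0) < r" using Mu_nonneg by auto
qed

lemma singleton_sets: "w \<in> L \<Longrightarrow> {w} \<in> sets mu"
proof -
  assume "w \<in> L"
  have "closed {w}" by (rule finite_closed_word) simp
  then have "{w} \<in> sets borel" by (rule borel_closed)
  then show ?thesis unfolding sets_mu using \<open>w \<in> L\<close> borel_closed[OF closedL]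
    by (subst sets_restrict_space_iff) auto
qed

lemma nonatomic_mu: "nonatomic L mu"
  unfolding nonatomic_def
proof
  fix w assume w: "w \<in> L"
  interpret P: prob_space mu by (rule prob_mu)
  have le: "measure mu {w} \<le> Mu (map w [0..<l])" for l
  proof -
    have "{w} \<subseteq> Cyl L (map w [0..<l])" using w unfolding Cyl_def by auto
    then have "measure mu {w} \<le> measure mu (Cyl L (map w [0..<l]))"
      using P.finite_measure_mono Cyl_sets by blast
    then show ?thesis using mu_cyl by simp
  qed
  have "measure mu {w} \<le> 0"
    by (rule LIMSEQ_le_const[OF Mu_pref_lim[OF w]]) (use le in auto)
  then show "measure mu {w} = 0" by (simp add: antisym)
qed

end



context seqL
begin

lemma Mu_pref_pos: "w \<in> L \<Longrightarrow> Mu (map w [0..<l]) > 0"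
proof -
  define K where "K = {w \<in> L. \<forall>l. Mu (map w [0..<l]) > 0}"
  have Keq: "K = L \<inter> \<Inter> {- cylset u | u. Mu u = 0}"
  proof (intro equalityI subsetI)
    fix w assume "w \<in> K"
    then have w: "w \<in> L" "\<forall>l. Mu (map w [0..<l]) > 0" unfolding K_def by auto
    have "w \<notin> cylset u" if "Mu u = 0" for u
    proof
      assume "w \<in> cylset u"
      then have "map w [0..<length u] = u" by (simp add: cylset_map)
      moreover have "Mu (map w [0..<length u]) > 0" using w(2) by blast
      ultimately show False using that by simp
    qed
    then show "w \<in> L \<inter> \<Inter> {- cylset u | u. Mu u = 0}" using w by auto
  next
    fix w assume w: "w \<in> L \<inter> \<Inter> {- cylset u | u. Mu u = 0}"
    have "Mu (map w [0..<l]) > 0" for l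
    proof -
      have "w \<in> cylset (map w [0..<l])" by (simp add: cylset_map)
      then have "Mu (map w [0..<l]) \<noteq> 0" using w by blast
      then show ?thesis using Mu_nonneg by (simp add: order_le_neq_trans)
    qed
    then show "w \<in> K" using w unfolding K_def by auto
  qed
  have "closed K" unfolding Keq
    by (intro closed_Int closedL closed_Inter) (auto intro: closed_Compl cylset_open)
  moreover have "K \<subseteq> L" unfolding K_def by auto
  moreover have "psi 0 \<in> K"
  proof -
    have "Mu (map (psi 0) [0..<l]) > 0" for l using psi_In[of 0 l] unfolding In_def by simp
    then show ?thesis unfolding K_def using psi_in[of 0] by simp
  qed
  moreover have "shift ` K \<subseteq> K"
  proof
    fix y assume "y \<in> shift ` K"
    then obtain w where w: "w \<in> K" "y = shift w" by auto
    have wL: "w \<in> L" using w K_def by auto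
    have "Mu (map y [0..<l]) > 0" for l
    proof -
      have "\<forall>l. Mu (map w [0..<l]) > 0" using w(1) unfolding K_def by blast
      then have "Mu (map w [0..<Suc l]) > 0" by blast
      also have "Mu (map w [0..<Suc l]) \<le> Mu (map y [0..<l])" unfolding map_Suc_shift w(2)
        by (rule Mu_Cons_le[OF letter[OF wL, of 0]])
      finally show ?thesis .
    qed
    then show "y \<in> K" unfolding K_def using shift_in wL w by simp
  qed
  ultimately have "K = L" using minimal by blast
  then show "w \<in> L \<Longrightarrow> Mu (map w [0..<l]) > 0" unfolding K_def by auto
qed

lemma Mu_Fact_pos: "u \<in> Fact L l \<Longrightarrow> Mu u > 0"
  by (erule Fact_memE) (simp add: Mu_pref_pos)

lemma psi0_min: "z \<in> L \<Longrightarrow> word_le (psi 0) z"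
proof (rule ccontr)
  assume z: "z \<in> L" "\<not> word_le (psi 0) z"
  then have "word_less z (psi 0)" using word_total unfolding word_le_def by blast
  then obtain l where l: "list_lex_less (map z [0..<l]) (map (psi 0) [0..<l])"
    using word_less_pref by blast
  have "Gf (map z [0..<l]) + Mu (map z [0..<l]) \<le> Gf (map (psi 0) [0..<l])"
    by (rule sep) (use l in auto)
  moreover have "Gf (map (psi 0) [0..<l]) \<le> 0" using psi_In[of 0 l] unfolding In_def by simp
  moreover have "Mu (map z [0..<l]) > 0" using Mu_pref_pos z by simp
  ultimately show False using Gf_nonneg[of "map z [0..<l]"] by simp
qed

lemma word_min_eq: "word_min L = psi 0"
  unfolding word_min_def
proof (rule the_equality)
  show "psi 0 \<in> L \<and> (\<forall>w'\<in>L. word_le (psi 0) w')" using psi_in[of 0] psi0_min by simp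
  fix w assume w: "w \<in> L \<and> (\<forall>w'\<in>L. word_le w w')"
  then have "word_le w (psi 0)" "word_le (psi 0) w" using psi_in[of 0] psi0_min by auto
  then show "w = psi 0" unfolding word_le_def using word_asym by blast
qed

definition Y :: "word \<Rightarrow> real" where
  "Y z = (SUP l. Gf (map z [0..<l]))"

lemma Gf_pref_mono: "l \<le> l' \<Longrightarrow> Gf (map z [0..<l]) \<le> Gf (map z [0..<l'])"
  using Gf_take_le[of l "map z [0..<l']"] by (simp add: take_map min_def)

lemma h_pref_anti: "l \<le> l' \<Longrightarrow> Gf (map z [0..<l']) + Mu (map z [0..<l']) \<le> Gf (map z [0..<l]) + Mu (map z [0..<l])"
  using nest_take[of "map z [0..<l']" l] by (simp add: take_map min_def)

lemma Gf_le_h: "Gf (map z [0..<l']) \<le> Gf (map z [0..<l]) + Mu (map z [0..<l])"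
proof -
  have "Gf (map z [0..<l']) \<le> Gf (map z [0..<max l l'])" by (rule Gf_pref_mono) simp
  also have "\<dots> \<le> Gf (map z [0..<max l l']) + Mu (map z [0..<max l l'])" using Mu_nonneg by simp
  also have "\<dots> \<le> Gf (map z [0..<l]) + Mu (map z [0..<l])" by (rule h_pref_anti) simp
  finally show ?thesis .
qed

lemma bdd_Gf: "bdd_above (range (\<lambda>l. Gf (map z [0..<l])))"
proof (rule bdd_aboveI[of _ 1])
  have g: "Gf u \<le> 1" for u using Gf_Mu_le1[of u] Mu_nonneg[of u] by linarith
  fix y assume "y \<in> range (\<lambda>l. Gf (map z [0..<l]))"
  then show "y \<le> 1" using g by auto
qed

lemma Y_ge: "Gf (map z [0..<l]) \<le> Y z"
  unfolding Y_def by (rule cSUP_upper[OF _ bdd_Gf]) simp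

lemma Y_le: "Y z \<le> Gf (map z [0..<l]) + Mu (map z [0..<l])"
  unfolding Y_def by (rule cSUP_least) (auto intro: Gf_le_h)

lemma Y_01: "0 \<le> Y z" "Y z \<le> 1"
  using Y_ge[of z 0] Y_le[of z 0] Mu_Nil by auto

lemma Y_psi: "0 \<le> x \<Longrightarrow> x < 1 \<Longrightarrow> Y (psi x) = x"
proof -
  assume x: "0 \<le> x" "x < 1"
  have d: "\<bar>Y (psi x) - x\<bar> \<le> Mu (map (psi x) [0..<l])" for l
    using Y_ge[of "psi x" l] Y_le[of "psi x" l] psi_In[OF x, of l] unfolding In_def by auto
  have "(\<lambda>l. \<bar>Y (psi x) - x\<bar>) \<longlonglongrightarrow> \<bar>Y (psi x) - x\<bar>" by simp
  have "\<bar>Y (psi x) - x\<bar> \<le> 0"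
    by (rule LIMSEQ_le_const[OF Mu_pref_lim[OF psi_in[OF x]]]) (use d in auto)
  then show ?thesis by simp
qed

lemma below_Y: "z \<in> L \<Longrightarrow> 0 \<le> x \<Longrightarrow> x < Y z \<Longrightarrow> word_less (psi x) z"
proof -
  assume z: "z \<in> L" and x: "0 \<le> x" "x < Y z"
  then have x1: "x < 1" using Y_01[of z] by linarith
  obtain l where l: "x < Gf (map z [0..<l])"
    using x(2) unfolding Y_def using less_cSUP_iff[OF UNIV_not_empty bdd_Gf] by blast
  define u where "u = map z [0..<l]"
  define v where "v = map (psi x) [0..<l]"
  have Iv: "In x v" unfolding v_def by (rule psi_In[OF x(1) x1])
  have "v \<noteq> u" using Iv l unfolding In_def u_def by auto
  then have "list_lex_less v u \<or> list_lex_less u v" using lex_total u_def v_def by simp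
  moreover have "\<not> list_lex_less u v"
  proof
    assume "list_lex_less u v"
    then have "Gf u + Mu u \<le> Gf v" using sep u_def v_def by simp
    then show False using Iv l Mu_nonneg[of u] unfolding In_def u_def by simp
  qed
  ultimately have "list_lex_less v u" by simp
  then show ?thesis using word_less_pref u_def v_def by blast
qed

lemma above_Y: "z \<in> L \<Longrightarrow> x < 1 \<Longrightarrow> Y z < x \<Longrightarrow> word_less z (psi x)"
proof -
  assume z: "z \<in> L" and x: "x < 1" "Y z < x"
  have x0: "0 \<le> x" using x Y_01[of z] by linarith
  obtain l where l: "Mu (map z [0..<l]) < x - Y z" using Mu_pref_small[OF z, of "x - Y z"] x by auto
  define u where "u = map z [0..<l]"
  define v where "v = map (psi x) [0..<l]"
  have Iv: "In x v" unfolding v_def by (rule psi_In[OF x0 x(1)])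
  have hu: "Gf u + Mu u < x" using Y_ge[of z l] l unfolding u_def by simp
  have "v \<noteq> u" using Iv hu unfolding In_def by auto
  then have "list_lex_less v u \<or> list_lex_less u v" using lex_total u_def v_def by simp
  moreover have "\<not> list_lex_less v u"
  proof
    assume "list_lex_less v u"
    then have "Gf v + Mu v \<le> Gf u" using sep u_def v_def by simp
    then show False using Iv hu Mu_nonneg[of u] unfolding In_def by simp
  qed
  ultimately have "list_lex_less u v" by simp
  then show ?thesis using word_less_pref u_def v_def by blast
qed

lemma open_less: "open {w. word_less w z}"
proof (subst open_subopen, intro ballI)
  fix w assume "w \<in> {w. word_less w z}"
  then obtain l where l: "list_lex_less (map w [0..<l]) (map z [0..<l])" using word_less_pref by blast
  have "cylset (map w [0..<l]) \<subseteq> {w. word_less w z}"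
  proof
    fix w' assume "w' \<in> cylset (map w [0..<l])"
    then have e: "map w' [0..<l] = map w [0..<l]" by (simp add: cylset_map)
    have "list_lex_less (map w' [0..<l]) (map z [0..<l])" unfolding e by (rule l)
    then show "w' \<in> {w. word_less w z}" using word_less_pref by blast
  qed
  moreover have "w \<in> cylset (map w [0..<l])" by (simp add: cylset_map)
  ultimately show "\<exists>T. open T \<and> w \<in> T \<and> T \<subseteq> {w. word_less w z}" using cylset_open by blast
qed

lemma interval_sets: "z \<in> L \<Longrightarrow> {w \<in> L. word_le w z} \<in> sets mu"
proof -
  assume z: "z \<in> L"
  have "{w \<in> L. word_le w z} = L \<inter> ({z} \<union> {w. word_less w z})" unfolding word_le_def by auto
  moreover have "{z} \<union> {w. word_less w z} \<in> sets borel"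
    using finite_closed_word[of "{z}"] open_less by (intro sets.Un borel_closed borel_open) auto
  ultimately show ?thesis unfolding sets_mu using borel_closed[OF closedL]
    by (subst sets_restrict_space_iff) auto
qed

lemma phi_mu_Y: "z \<in> L \<Longrightarrow> phi_mu L mu z = Y z"
proof -
  assume z: "z \<in> L"
  have wi: "word_interval L (word_min L) z = {w \<in> L. word_le w z}"
    unfolding word_interval_def word_min_eq using psi0_min by auto
  define S where "S = psi -` {w \<in> L. word_le w z} \<inter> {0..<1}"
  have pm: "phi_mu L mu z = measure lborel S"
    unfolding phi_mu_def wi S_def by (rule measure_mu[OF interval_sets[OF z]])
  have SM0: "S \<in> sets M0" unfolding S_def
    using measurable_sets[OF psi_meas, of "{w \<in> L. word_le w z}"] interval_sets[OF z] sets_mu space_M0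
    by simp
  have Ssets: "S \<in> sets lborel" using SM0 unfolding M0_def
    by (subst (asm) sets_restrict_space_iff) auto
  have Y0: "0 \<le> Y z" "Y z \<le> 1" using Y_01 by auto
  have s1: "{0..<Y z} \<subseteq> S" unfolding S_def using below_Y[OF z] psi_in Y0
    by (auto simp: word_le_def)
  have s2: "S \<subseteq> {0..Y z}"
  proof
    fix x assume "x \<in> S"
    then have x: "0 \<le> x" "x < 1" "word_le (psi x) z" unfolding S_def by auto
    have "x \<le> Y z"
    proof (rule ccontr)
      assume "\<not> x \<le> Y z"
      then have "word_less z (psi x)" using above_Y[OF z x(2)] by simp
      then show False using x(3) word_asym word_irrefl unfolding word_le_def by blast
    qed
    then show "x \<in> {0..Y z}" using x by simp
  qed
  have fS: "S \<in> fmeasurable lborel"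
    by (rule fmeasurableI2[OF _ s2 Ssets]) (simp add: fmeasurable_compact)
  have "measure lborel {0..<Y z} \<le> measure lborel S"
    by (rule measure_mono_fmeasurable[OF s1 _ fS]) simp
  moreover have "measure lborel S \<le> measure lborel {0..Y z}"
    by (rule measure_mono_fmeasurable[OF s2 Ssets]) (simp add: fmeasurable_compact)
  ultimately have "measure lborel S = Y z" using Y0 by (simp add: measure_def)
  then show ?thesis using pm by simp
qed

lemma fst_phi_hat: "fst (phi_hat L mu w) = phi_mu L mu w"
  unfolding phi_hat_def by simp

lemma unique_pre:
  assumes x: "0 \<le> x" "x < 1" "x \<notin> range Gf" and z: "z \<in> L" "phi_mu L mu z = x"
  shows "z = psi x"
proof (rule ccontr)
  assume ne: "z \<noteq> psi x"
  have Yz: "Y z = x" using z phi_mu_Y by simp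
  have "word_less z (psi x) \<or> word_less (psi x) z" using word_total ne by blast
  then show False
  proof
    assume "word_less z (psi x)"
    then obtain l where l: "list_lex_less (map z [0..<l]) (map (psi x) [0..<l])" using word_less_pref by blast
    have "Gf (map z [0..<l]) + Mu (map z [0..<l]) \<le> Gf (map (psi x) [0..<l])" by (rule sep) (use l in auto)
    moreover have "Gf (map (psi x) [0..<l]) \<le> x" using psi_In[OF x(1,2), of l] unfolding In_def by simp
    moreover have "x \<le> Gf (map z [0..<l]) + Mu (map z [0..<l])" using Y_le[of z l] Yz by simp
    ultimately have "Gf (map (psi x) [0..<l]) = x" by simp
    then show False using x(3) by (metis rangeI)
  next
    assume "word_less (psi x) z"
    then obtain l where l: "list_lex_less (map (psi x) [0..<l]) (map z [0..<l])" using word_less_pref by blast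
    have "Gf (map (psi x) [0..<l]) + Mu (map (psi x) [0..<l]) \<le> Gf (map z [0..<l])" by (rule sep) (use l in auto)
    moreover have "x < Gf (map (psi x) [0..<l]) + Mu (map (psi x) [0..<l])" using psi_In[OF x(1,2), of l] unfolding In_def by simp
    moreover have "Gf (map z [0..<l]) \<le> x" using Y_ge[of z l] Yz by simp
    ultimately show False by simp
  qed
qed

lemma T_L_eq:
  assumes x: "0 \<le> x" "x < 1" "x \<notin> range Gf"
  shows "T_L L mu x = Y (shift (psi x))"
proof -
  have pL: "psi x \<in> L" using psi_in x by simp
  have pm: "phi_mu L mu (psi x) = x" using phi_mu_Y[OF pL] Y_psi x by simp
  have ph: "phi_hat L mu (psi x) = (x, True)"
  proof -
    have "\<not> (\<exists>w'. word_less (psi x) w' \<and> {v \<in> L. phi_mu L mu v = phi_mu L mu (psi x)} = {psi x, w'})"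
    proof
      assume "\<exists>w'. word_less (psi x) w' \<and> {v \<in> L. phi_mu L mu v = phi_mu L mu (psi x)} = {psi x, w'}"
      then obtain w' where w': "word_less (psi x) w'" "{v \<in> L. phi_mu L mu v = phi_mu L mu (psi x)} = {psi x, w'}"
        by blast
      then have "w' \<in> L" "phi_mu L mu w' = x" using pm by auto
      then have "w' = psi x" using unique_pre x by blast
      then show False using w'(1) word_irrefl by simp
    qed
    then show ?thesis unfolding phi_hat_def using pm by simp
  qed
  have inv: "inv_into L (phi_hat L mu) (x, True) = psi x"
    unfolding inv_into_def
  proof (rule some_equality)
    show "psi x \<in> L \<and> phi_hat L mu (psi x) = (x, True)" using pL ph by simp
    fix y assume y: "y \<in> L \<and> phi_hat L mu y = (x, True)"
    then have "phi_mu L mu y = x" using fst_phi_hat[of y] by simp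
    then show "y = psi x" using unique_pre x y by blast
  qed
  have "T_L L mu x = fst (phi_hat L mu (shift (psi x)))"
    unfolding T_L_def T_hat_def kappa_def iota_def inv by simp
  also have "\<dots> = Y (shift (psi x))" using fst_phi_hat phi_mu_Y shift_in pL by simp
  finally show ?thesis .
qed

end



lemma lex_snoc_iff:
  assumes "length xs = length ys"
  shows "list_lex_less (xs @ [x]) (ys @ [y]) \<longleftrightarrow> list_lex_less xs ys \<or> (xs = ys \<and> x < y)"
proof
  assume "list_lex_less (xs @ [x]) (ys @ [y])"
  then obtain i where i: "i < Suc (length xs)" "take i (xs @ [x]) = take i (ys @ [y])"
    "(xs @ [x]) ! i < (ys @ [y]) ! i" unfolding list_lex_less_def by auto
  show "list_lex_less xs ys \<or> (xs = ys \<and> x < y)"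
  proof (cases "i < length xs")
    case True
    then have "take i xs = take i ys" "xs ! i < ys ! i" using i assms by (auto simp: nth_append)
    then show ?thesis using True assms unfolding list_lex_less_def by auto
  next
    case False
    then have "i = length xs" using i by simp
    then show ?thesis using i assms by (auto simp: nth_append)
  qed
next
  assume "list_lex_less xs ys \<or> (xs = ys \<and> x < y)"
  then show "list_lex_less (xs @ [x]) (ys @ [y])"
  proof
    assume "list_lex_less xs ys"
    then obtain i where "i < length xs" "i < length ys" "take i xs = take i ys" "xs ! i < ys ! i"
      unfolding list_lex_less_def by auto
    then show ?thesis unfolding list_lex_less_def by (intro exI[of _ i]) (auto simp: nth_append)
  next
    assume "xs = ys \<and> x < y"
    then show ?thesis unfolding list_lex_less_def by (intro exI[of _ "length xs"]) auto
  qed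
qed

context seqL
begin

definition Cnt :: "nat \<Rightarrow> nat list \<Rightarrow> nat" where
  "Cnt m u = card {v \<in> Fact L m. list_lex_less (take (length u) v) u}"

lemma Cnt_Nil: "Cnt m [] = 0" unfolding Cnt_def list_lex_less_def by simp

lemma Cnt_snoc:
  assumes "length u < m"
  shows "Cnt m (u @ [a]) = Cnt m u + (\<Sum>b<a. pL_pref L (u @ [b]) m)"
proof -
  let ?l = "length u"
  let ?A = "{v \<in> Fact L m. list_lex_less (take ?l v) u}"
  have eq: "{v \<in> Fact L m. list_lex_less (take (length (u @ [a])) v) (u @ [a])}
      = ?A \<union> (\<Union>b<a. Fact_pref L (u @ [b]) m)"
  proof (intro equalityI subsetI)
    fix v assume v: "v \<in> {v \<in> Fact L m. list_lex_less (take (length (u @ [a])) v) (u @ [a])}"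
    then have vF: "v \<in> Fact L m" and lv: "length v = m" using len_Fact by auto
    have tv: "take (Suc ?l) v = take ?l v @ [v ! ?l]" using lv assms by (simp add: take_Suc_conv_app_nth)
    have "list_lex_less (take ?l v @ [v ! ?l]) (u @ [a])" using v tv by simp
    then have "list_lex_less (take ?l v) u \<or> (take ?l v = u \<and> v ! ?l < a)"
      using lex_snoc_iff[of "take ?l v" u] lv assms by simp
    then show "v \<in> ?A \<union> (\<Union>b<a. Fact_pref L (u @ [b]) m)"
    proof
      assume "list_lex_less (take ?l v) u" then show ?thesis using vF by simp
    next
      assume "take ?l v = u \<and> v ! ?l < a"
      then have "v \<in> Fact_pref L (u @ [v ! ?l]) m" "v ! ?l < a" unfolding Fact_pref_def using vF tv by auto
      then show ?thesis by blast
    qed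
  next
    fix v assume v: "v \<in> ?A \<union> (\<Union>b<a. Fact_pref L (u @ [b]) m)"
    then have vF: "v \<in> Fact L m" unfolding Fact_pref_def by auto
    then have lv: "length v = m" using len_Fact by auto
    have tv: "take (Suc ?l) v = take ?l v @ [v ! ?l]" using lv assms by (simp add: take_Suc_conv_app_nth)
    have "list_lex_less (take ?l v) u \<or> (take ?l v = u \<and> v ! ?l < a)"
    proof (cases "v \<in> ?A")
      case True then show ?thesis by simp
    next
      case False
      then obtain b where "b < a" "take (Suc ?l) v = u @ [b]" using v unfolding Fact_pref_def by auto
      then show ?thesis using tv by auto
    qed
    then have "list_lex_less (take ?l v @ [v ! ?l]) (u @ [a])"
      using lex_snoc_iff[of "take ?l v" u] lv assms by simp
    then show "v \<in> {v \<in> Fact L m. list_lex_less (take (length (u @ [a])) v) (u @ [a])}"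
      using vF tv by simp
  qed
  have fA: "finite ?A" using fin_Fact by simp
  have disj1: "?A \<inter> (\<Union>b<a. Fact_pref L (u @ [b]) m) = {}"
  proof -
    have "list_lex_less (take ?l v) u \<Longrightarrow> v \<notin> Fact_pref L (u @ [b]) m" for v b
    proof
      assume "list_lex_less (take ?l v) u" "v \<in> Fact_pref L (u @ [b]) m"
      then have t: "take (Suc ?l) v = u @ [b]" unfolding Fact_pref_def by simp
      have "take ?l v = take ?l (take (Suc ?l) v)" by simp
      also have "\<dots> = u" using t by simp
      finally have "take ?l v = u" .
      then show False using \<open>list_lex_less (take ?l v) u\<close> lex_irrefl by simp
    qed
    then show ?thesis by auto
  qed
  have disj2: "disjoint_family_on (\<lambda>b. Fact_pref L (u @ [b]) m) {..<a}"
    unfolding disjoint_family_on_def Fact_pref_def by auto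
  have cU: "card (\<Union>b<a. Fact_pref L (u @ [b]) m) = (\<Sum>b<a. pL_pref L (u @ [b]) m)"
    unfolding pL_pref_def by (rule card_UN_disjoint') (use disj2 fin_Fact_pref in auto)
  show ?thesis unfolding Cnt_def eq
    by (subst card_Un_disjoint) (use fA disj1 fin_Fact_pref cU in auto)
qed

lemma Cnt_lim:
  assumes M: "filterlim M at_top sequentially"
    and lim: "\<And>u. (\<lambda>i. real (pL_pref L u (M i)) / real (pL L (M i))) \<longlonglongrightarrow> Mu u"
  shows "(\<lambda>i. real (Cnt (M i) u) / real (pL L (M i))) \<longlonglongrightarrow> Gf u"
proof (induction u rule: rev_induct)
  case Nil then show ?case by (simp add: Cnt_Nil)
next
  case (snoc a u)
  have s: "(\<lambda>i. real (Cnt (M i) u) / real (pL L (M i)) + (\<Sum>b<a. real (pL_pref L (u @ [b]) (M i)) / real (pL L (M i))))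
      \<longlonglongrightarrow> Gf u + (\<Sum>b<a. Mu (u @ [b]))"
    by (intro tendsto_add snoc tendsto_sum lim)
  have ev: "\<forall>\<^sub>F i in sequentially. real (Cnt (M i) u) / real (pL L (M i)) + (\<Sum>b<a. real (pL_pref L (u @ [b]) (M i)) / real (pL L (M i)))
      = real (Cnt (M i) (u @ [a])) / real (pL L (M i))"
  proof -
    have "\<forall>\<^sub>F i in sequentially. Suc (length u) \<le> M i" using M by (simp add: filterlim_at_top)
    then show ?thesis
    proof (rule eventually_mono)
      fix i assume "Suc (length u) \<le> M i"
      then have "Cnt (M i) (u @ [a]) = Cnt (M i) u + (\<Sum>b<a. pL_pref L (u @ [b]) (M i))" by (intro Cnt_snoc) simp
      then show "real (Cnt (M i) u) / real (pL L (M i)) + (\<Sum>b<a. real (pL_pref L (u @ [b]) (M i)) / real (pL L (M i)))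
      = real (Cnt (M i) (u @ [a])) / real (pL L (M i))" by (simp add: add_divide_distrib sum_divide_distrib)
    qed
  qed
  show ?case using Lim_transform_eventually[OF s ev] Gf_snoc by simp
qed

lemma n_pred_inf: "filterlim (\<lambda>i. n (rr i) - 1) at_top sequentially"
  unfolding filterlim_at_top
proof
  fix C show "\<forall>\<^sub>F i in sequentially. C \<le> n (rr i) - 1"
    using ev_n_ge[OF rr_mono, of "Suc C"] by (rule eventually_mono) simp
qed

lemma Cnt_lim0: "(\<lambda>i. real (Cnt (n (rr i)) u) / real (pL L (n (rr i)))) \<longlonglongrightarrow> Gf u"
  by (rule Cnt_lim[OF n_sub_inf[OF rr_mono] Mu_lim])

lemma Cnt_lim1: "(\<lambda>i. real (Cnt (n (rr i) - 1) u) / real (pL L (n (rr i) - 1))) \<longlonglongrightarrow> Gf u"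
  by (rule Cnt_lim[OF n_pred_inf Mu_lim1])

lemma fact_rank_of:
  assumes "r < pL L m"
  shows "fact_of_rank L m r \<in> Fact L m \<and> fact_rank L m (fact_of_rank L m r) = r"
proof -
  have bij: "bij_betw (\<lambda>v. card {z \<in> Fact L m. list_lex_less z v}) (Fact L m) {0..<card (Fact L m)}"
  proof (rule rank_bij[OF fin_Fact])
    show "\<forall>p\<in>Fact L m. \<forall>q\<in>Fact L m. \<forall>t\<in>Fact L m. list_lex_less p q \<longrightarrow> list_lex_less q t \<longrightarrow> list_lex_less p t"
      using lex_trans len_Fact by metis
    show "\<forall>p. \<not> list_lex_less p p" using lex_irrefl by blast
    show "\<forall>p\<in>Fact L m. \<forall>q\<in>Fact L m. p \<noteq> q \<longrightarrow> list_lex_less p q \<or> list_lex_less q p"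
      using lex_total len_Fact by metis
  qed
  have "\<exists>!v. v \<in> Fact L m \<and> fact_rank L m v = r"
  proof -
    have "r \<in> {0..<card (Fact L m)}" using assms unfolding pL_def by simp
    then have "r \<in> (\<lambda>v. card {z \<in> Fact L m. list_lex_less z v}) ` Fact L m"
      using bij_betw_imp_surj_on[OF bij] by simp
    then obtain v where v: "v \<in> Fact L m" "r = card {z \<in> Fact L m. list_lex_less z v}"
      by (rule imageE)
    have inj: "inj_on (\<lambda>v. card {z \<in> Fact L m. list_lex_less z v}) (Fact L m)"
      by (rule bij_betw_imp_inj_on[OF bij])
    have "v' = v" if "v' \<in> Fact L m" "fact_rank L m v' = r" for v'
      using inj_onD[OF inj _ that(1) v(1)] that(2) v(2) unfolding fact_rank_def by simp
    then show ?thesis using v unfolding fact_rank_def by blast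
  qed
  then show ?thesis unfolding fact_of_rank_def by (rule theI')
qed

lemma rank_lower:
  assumes "v \<in> Fact L m" "take l v = u" "l \<le> m"
  shows "Cnt m u \<le> fact_rank L m v"
proof -
  have lu: "length u = l" using assms len_Fact by auto
  have "{v' \<in> Fact L m. list_lex_less (take l v') u} \<subseteq> {v' \<in> Fact L m. list_lex_less v' v}"
    using lex_take_imp len_Fact assms by (metis (mono_tags, lifting) Collect_mono)
  then show ?thesis unfolding Cnt_def fact_rank_def lu using fin_Fact by (intro card_mono) auto
qed

lemma rank_upper:
  assumes "v \<in> Fact L m" "take l v = u" "l \<le> m"
  shows "fact_rank L m v < Cnt m u + pL_pref L u m"
proof -
  have lu: "length u = l" using assms len_Fact by auto
  let ?A = "{v' \<in> Fact L m. list_lex_less (take l v') u}"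
  let ?B = "Fact_pref L u m"
  have sub: "{v' \<in> Fact L m. list_lex_less v' v} \<subseteq> (?A \<union> ?B) - {v}"
  proof
    fix v' assume v': "v' \<in> {v' \<in> Fact L m. list_lex_less v' v}"
    then have vF: "v' \<in> Fact L m" "list_lex_less v' v" by auto
    have "\<not> list_lex_less (take l v) (take l v')" using lex_imp_take vF len_Fact assms by metis
    moreover have "length (take l v') = length u" using vF len_Fact assms lu by simp
    ultimately have "list_lex_less (take l v') u \<or> take l v' = u" using lex_total assms(2) by metis
    moreover have "v' \<noteq> v" using vF lex_irrefl by blast
    ultimately show "v' \<in> (?A \<union> ?B) - {v}" using vF unfolding Fact_pref_def lu by auto
  qed
  have vB: "v \<in> ?A \<union> ?B" using assms unfolding Fact_pref_def lu by auto
  have fin: "finite (?A \<union> ?B)" using fin_Fact fin_Fact_pref by simp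
  have "fact_rank L m v \<le> card ((?A \<union> ?B) - {v})"
    unfolding fact_rank_def by (rule card_mono) (use fin sub in auto)
  also have "\<dots> < card (?A \<union> ?B)" by (rule card_Diff1_less[OF fin vB])
  also have "\<dots> \<le> card ?A + card ?B" by (rule card_Un_le)
  finally show ?thesis unfolding Cnt_def pL_pref_def lu .
qed

lemma Cnt_step:
  assumes "length u1 = l" "length u2 = l" "list_lex_less u1 u2" "l \<le> m"
  shows "Cnt m u1 + pL_pref L u1 m \<le> Cnt m u2"
proof -
  let ?A = "{v' \<in> Fact L m. list_lex_less (take l v') u1}"
  let ?B = "Fact_pref L u1 m"
  have "?A \<union> ?B \<subseteq> {v' \<in> Fact L m. list_lex_less (take l v') u2}"
  proof
    fix v assume "v \<in> ?A \<union> ?B"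
    then have vF: "v \<in> Fact L m" and c: "list_lex_less (take l v) u1 \<or> take l v = u1"
      unfolding Fact_pref_def assms(1) by auto
    have "length (take l v) = l" using vF len_Fact assms by simp
    then have "list_lex_less (take l v) u2" using c lex_trans assms by metis
    then show "v \<in> {v' \<in> Fact L m. list_lex_less (take l v') u2}" using vF by simp
  qed
  moreover have "?A \<inter> ?B = {}" unfolding Fact_pref_def assms(1) using lex_irrefl by auto
  ultimately have "card ?A + card ?B \<le> card {v' \<in> Fact L m. list_lex_less (take l v') u2}"
    using fin_Fact fin_Fact_pref card_Un_disjoint card_mono
    by (metis (no_types, lifting) finite_Un mem_Collect_eq finite_subset subsetI)
  then show ?thesis unfolding Cnt_def pL_pref_def assms(1,2) .
qed

lemma prefix_from_rank:
  assumes "v \<in> Fact L m" "length u = l" "l \<le> m"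
    and "Cnt m u \<le> fact_rank L m v" "fact_rank L m v < Cnt m u + pL_pref L u m"
  shows "take l v = u"
proof (rule ccontr)
  assume ne: "take l v \<noteq> u"
  have lt: "length (take l v) = l" using assms len_Fact by simp
  then have "list_lex_less (take l v) u \<or> list_lex_less u (take l v)" using lex_total ne assms(2) by metis
  then show False
  proof
    assume "list_lex_less (take l v) u"
    then have "Cnt m (take l v) + pL_pref L (take l v) m \<le> Cnt m u" using Cnt_step lt assms by blast
    moreover have "fact_rank L m v < Cnt m (take l v) + pL_pref L (take l v) m"
      using rank_upper assms by blast
    ultimately show False using assms(4) by simp
  next
    assume "list_lex_less u (take l v)"
    then have "Cnt m u + pL_pref L u m \<le> Cnt m (take l v)" using Cnt_step lt assms by blast
    moreover have "Cnt m (take l v) \<le> fact_rank L m v" using rank_lower assms by blast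
    ultimately show False using assms(5) by simp
  qed
qed

end



context seqL
begin

lemma take_tl_eq: "take l (tl v) = tl (take (Suc l) v)" by (cases v) auto

lemma T_conv:
  assumes x: "0 \<le> x" "x < 1" "x \<notin> range Gf"
  shows "(\<lambda>i. T_map L (n (rr i)) x) \<longlonglongrightarrow> Y (shift (psi x))"
proof (rule tendstoI)
  fix e :: real assume e: "e > 0"
  define z' where "z' = shift (psi x)"
  have z'L: "z' \<in> L" unfolding z'_def using psi_in x shift_in by simp
  obtain l0 where l0: "\<forall>l\<ge>l0. Mu (map z' [0..<l]) < e / 2" using Mu_pref_small[OF z'L, of "e/2"] e by auto
  define l where "l = l0"
  have lsmall: "Mu (map z' [0..<l]) < e / 2" using l0 l_def by simp
  define u where "u = map (psi x) [0..<Suc l]"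
  define u' where "u' = map z' [0..<l]"
  have tlu: "tl u = u'" unfolding u_def u'_def z'_def map_Suc_shift by simp
  have lenu: "length u = Suc l" "length u' = l" unfolding u_def u'_def by auto
  have Iu: "In x u" unfolding u_def by (rule psi_In[OF x(1,2)])
  have Gu: "Gf u < x" using Iu x(3) unfolding In_def by (metis order_le_neq_trans rangeI)
  have Hu: "x < Gf u + Mu u" using Iu unfolding In_def by simp
  have ev1: "\<forall>\<^sub>F i in sequentially. Suc (Suc l) \<le> n (rr i)" by (rule ev_n_ge[OF rr_mono])
  have ev2: "\<forall>\<^sub>F i in sequentially. real (Cnt (n (rr i)) u) / real (pL L (n (rr i))) < x"
    by (rule order_tendstoD(2)[OF Cnt_lim0 Gu])
  have ev3: "\<forall>\<^sub>F i in sequentially. x < real (Cnt (n (rr i)) u) / real (pL L (n (rr i))) + real (pL_pref L u (n (rr i))) / real (pL L (n (rr i)))"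
    by (rule order_tendstoD(1)[OF tendsto_add[OF Cnt_lim0 Mu_lim] Hu])
  have ev4: "\<forall>\<^sub>F i in sequentially. Gf u' - e / 2 < real (Cnt (n (rr i) - 1) u') / real (pL L (n (rr i) - 1))"
    by (rule order_tendstoD(1)[OF Cnt_lim1]) (use e in simp)
  have ev5: "\<forall>\<^sub>F i in sequentially. real (Cnt (n (rr i) - 1) u') / real (pL L (n (rr i) - 1)) + real (pL_pref L u' (n (rr i) - 1)) / real (pL L (n (rr i) - 1)) < Gf u' + Mu u' + e / 2"
    by (rule order_tendstoD(2)[OF tendsto_add[OF Cnt_lim1 Mu_lim1]]) (use e in simp)
  have Ybd: "Gf u' \<le> Y z'" "Y z' \<le> Gf u' + Mu u'" unfolding u'_def using Y_ge Y_le by auto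
  have Mu'small: "Mu u' < e / 2" using lsmall u'_def by simp
  have "\<forall>\<^sub>F i in sequentially. Suc (Suc l) \<le> n (rr i) \<and>
      real (Cnt (n (rr i)) u) / real (pL L (n (rr i))) < x \<and>
      x < real (Cnt (n (rr i)) u) / real (pL L (n (rr i))) + real (pL_pref L u (n (rr i))) / real (pL L (n (rr i))) \<and>
      Gf u' - e / 2 < real (Cnt (n (rr i) - 1) u') / real (pL L (n (rr i) - 1)) \<and>
      real (Cnt (n (rr i) - 1) u') / real (pL L (n (rr i) - 1)) + real (pL_pref L u' (n (rr i) - 1)) / real (pL L (n (rr i) - 1)) < Gf u' + Mu u' + e / 2"
    using ev1 ev2 ev3 ev4 ev5 by (intro eventually_conj)
  then show "\<forall>\<^sub>F i in sequentially. dist (T_map L (n (rr i)) x) (Y (shift (psi x))) < e"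
  proof (rule eventually_mono)
    fix i
    define m where "m = n (rr i)"
    assume "Suc (Suc l) \<le> n (rr i) \<and>
      real (Cnt (n (rr i)) u) / real (pL L (n (rr i))) < x \<and>
      x < real (Cnt (n (rr i)) u) / real (pL L (n (rr i))) + real (pL_pref L u (n (rr i))) / real (pL L (n (rr i))) \<and>
      Gf u' - e / 2 < real (Cnt (n (rr i) - 1) u') / real (pL L (n (rr i) - 1)) \<and>
      real (Cnt (n (rr i) - 1) u') / real (pL L (n (rr i) - 1)) + real (pL_pref L u' (n (rr i) - 1)) / real (pL L (n (rr i) - 1)) < Gf u' + Mu u' + e / 2"
    then have c1: "Suc (Suc l) \<le> m"
      and c2: "real (Cnt m u) / real (pL L m) < x"
      and c3: "x < real (Cnt m u) / real (pL L m) + real (pL_pref L u m) / real (pL L m)"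
      and c4: "Gf u' - e / 2 < real (Cnt (m - 1) u') / real (pL L (m - 1))"
      and c5: "real (Cnt (m - 1) u') / real (pL L (m - 1)) + real (pL_pref L u' (m - 1)) / real (pL L (m - 1)) < Gf u' + Mu u' + e / 2"
      unfolding m_def by auto
    define P where "P = real (pL L m)"
    define P' where "P' = real (pL L (m - 1))"
    have P: "P > 0" "P' > 0" unfolding P_def P'_def using pL_pos by auto
    define r where "r = nat \<lfloor>x * P\<rfloor>"
    have xP: "0 \<le> x * P" using x P by simp
    have rr1: "real r \<le> x * P" "x * P < real r + 1" unfolding r_def using xP
      by (auto simp: of_nat_nat)
    have rlt: "r < pL L m"
    proof -
      have "x * P < P" using x P by simp
      then have "real r < P" using rr1 by linarith
      then show ?thesis unfolding P_def by simp
    qed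
    have cnt1: "real (Cnt m u) < x * P" using c2 P unfolding P_def[symmetric] by (simp add: divide_less_eq)
    have "Cnt m u \<le> r" using cnt1 rr1 by linarith
    have cnt2: "x * P < real (Cnt m u) + real (pL_pref L u m)"
      using c3 P unfolding P_def[symmetric] add_divide_distrib[symmetric] by (simp add: less_divide_eq)
    have "r < Cnt m u + pL_pref L u m" using cnt2 rr1 by linarith
    define v where "v = fact_of_rank L m r"
    have vF: "v \<in> Fact L m" and rv: "fact_rank L m v = r" using fact_rank_of[OF rlt] v_def by auto
    have tv: "take (Suc l) v = u"
      by (rule prefix_from_rank[OF vF lenu(1)]) (use c1 rv \<open>Cnt m u \<le> r\<close> \<open>r < Cnt m u + pL_pref L u m\<close> in auto)
    define w where "w = tl v"
    have wF: "w \<in> Fact L (m - 1)" unfolding w_def by (rule tl_Fact[OF vF])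
    have tw: "take l w = u'" unfolding w_def take_tl_eq tv tlu ..
    have lm: "l \<le> m - 1" using c1 by simp
    define R where "R = fact_rank L (m - 1) w"
    have R1: "Cnt (m - 1) u' \<le> R" unfolding R_def by (rule rank_lower[OF wF tw lm])
    have R2: "R < Cnt (m - 1) u' + pL_pref L u' (m - 1)" unfolding R_def by (rule rank_upper[OF wF tw lm])
    have T: "T_map L m x = (real R + (x * P - real r)) / P'"
      unfolding T_map_def Let_def P_def[symmetric] r_def[symmetric] v_def[symmetric] w_def[symmetric] R_def P'_def ..
    have low: "real (Cnt (m - 1) u') / P' \<le> T_map L m x"
      unfolding T using R1 rr1 P by (intro divide_right_mono) auto
    have "real R + (x * P - real r) < real (Cnt (m - 1) u') + real (pL_pref L u' (m - 1))"
      using R2 rr1 by linarith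
    then have up: "T_map L m x < real (Cnt (m - 1) u') / P' + real (pL_pref L u' (m - 1)) / P'"
      unfolding T add_divide_distrib[symmetric] using P by (intro divide_strict_right_mono) auto
    have "Gf u' - e / 2 < T_map L m x" using c4 low unfolding P'_def by linarith
    moreover have "T_map L m x < Gf u' + Mu u' + e / 2" using c5 up unfolding P'_def by linarith
    ultimately have "\<bar>T_map L m x - Y z'\<bar> < e" using Ybd Mu'small by (simp add: abs_less_iff)
    then show "dist (T_map L (n (rr i)) x) (Y (shift (psi x))) < e"
      unfolding m_def z'_def dist_real_def by simp
  qed
qed

end

theorem mainTheorem20:
  fixes k :: nat and L :: "word set" and n :: "nat \<Rightarrow> nat"
  assumes "minimal_shift k L"
      and "aperiodic_shift L"
      and "zero_entropy L"
      and "\<forall>s. n s \<ge> 2"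
      and "(\<lambda>s. real (pL L (n s)) / real (pL L (n s - 1))) \<longlonglongrightarrow> 1"
  shows "\<exists>r :: nat \<Rightarrow> nat. \<exists>Mu :: nat list \<Rightarrow> real. \<exists>\<mu> :: word measure. \<exists>T :: real \<Rightarrow> real.
           strict_mono r \<and>
           (\<forall>u \<in> Facts L. (\<lambda>i. real (pL_pref L u (n (r i))) / real (pL L (n (r i)))) \<longlonglongrightarrow> Mu u) \<and>
           borel_prob_on L \<mu> \<and> shift_invariant L \<mu> \<and> nonatomic L \<mu> \<and>
           (\<forall>u \<in> Facts L. measure \<mu> (Cyl L u) = Mu u) \<and>
           (\<exists>S. S \<subseteq> {0..<1} \<and> S \<in> sets lebesgue \<and> emeasure lebesgue ({0..<1} - S) = 0 \<and>
                (\<forall>x \<in> S. (\<lambda>i. T_map L (n (r i)) x) \<longlonglongrightarrow> T x)) \<and>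
           (AE x in lebesgue. x \<in> {0..<1} \<longrightarrow> T x = T_L L \<mu> x)"
proof -
  have ms: "is_shift k L" "L \<noteq> {}"
    and mn: "\<forall>K. K \<subseteq> L \<and> K \<noteq> {} \<and> closed K \<and> shift ` K \<subseteq> K \<longrightarrow> K = L"
    using assms(1) unfolding minimal_shift_def by auto
  interpret seqL k L n
  proof unfold_locales
    show "L \<subseteq> alph_words k" "shift ` L \<subseteq> L" "closed L" using ms(1) unfolding is_shift_def by auto
    show "L \<noteq> {}" by (rule ms(2))
    show "\<And>K. K \<subseteq> L \<Longrightarrow> K \<noteq> {} \<Longrightarrow> closed K \<Longrightarrow> shift ` K \<subseteq> K \<Longrightarrow> K = L" using mn by blast
    show "aperiodic_shift L" by (rule assms(2))
    show "\<And>s. 2 \<le> n s" using assms(4) by blast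
    show "(\<lambda>s. real (pL L (n s)) / real (pL L (n s - 1))) \<longlonglongrightarrow> 1" by (rule assms(5))
  qed
  define S where "S = {0..<1::real} - range Gf"
  have cG: "countable (range Gf)" by simp
  have nullG: "range Gf \<in> null_sets lborel" by (rule countable_imp_null_set_lborel[OF cG])
  have S1: "S \<subseteq> {0..<1}" unfolding S_def by auto
  have S2: "S \<in> sets lebesgue"
  proof -
    have "S \<in> sets lborel" unfolding S_def using nullG by (intro sets.Diff) auto
    then show ?thesis by simp
  qed
  have S3: "emeasure lebesgue ({0..<1} - S) = 0"
  proof -
    have "{0..<1} - S = {0..<1} \<inter> range Gf" unfolding S_def by auto
    moreover have "{0..<1} \<inter> range Gf \<in> null_sets lborel"
      by (rule countable_imp_null_set_lborel) simp
    ultimately have "{0..<1} - S \<in> null_sets lebesgue" using null_sets_completionI by simp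
    then show ?thesis by auto
  qed
  have S4: "\<forall>x \<in> S. (\<lambda>i. T_map L (n (rr i)) x) \<longlonglongrightarrow> T_L L mu x"
  proof
    fix x assume "x \<in> S"
    then have x: "0 \<le> x" "x < 1" "x \<notin> range Gf" unfolding S_def by auto
    show "(\<lambda>i. T_map L (n (rr i)) x) \<longlonglongrightarrow> T_L L mu x" using T_conv[OF x] T_L_eq[OF x] by simp
  qed
  have cyl: "\<forall>u \<in> Facts L. measure mu (Cyl L u) = Mu u" using mu_cyl by simp
  have lim: "\<forall>u \<in> Facts L. (\<lambda>i. real (pL_pref L u (n (rr i))) / real (pL L (n (rr i)))) \<longlonglongrightarrow> Mu u"
    using Mu_lim by simp
  show ?thesis
    apply (rule exI[of _ rr], rule exI[of _ Mu], rule exI[of _ mu], rule exI[of _ "T_L L mu"])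
    using rr_mono lim borel_prob_mu shift_inv_mu nonatomic_mu cyl S1 S2 S3 S4 by blast
qed


end
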